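(* Fix $p\in[\tfrac23,1)$. Let $\zeta_p=1$ for $p>\tfrac23$ and $\zeta_{2/3}=e^{-1/4}$. Then, as $d\to\infty$, \[ \frac{\sum_{S\in\mathsf{Good}^{\mathsf{Even}}}2^{-N_p(S)}-\zeta_p\exp(\Phi_{\mathsf{Even}})}{\sigma_p\exp(\mu_p)}\xrightarrow{\mathbb P}0, \qquad \frac{\sum_{S\in\mathsf{Good}^{\mathsf{Even}}}2^{-N_p(S)}}{\zeta_p\exp(\Phi_{\mathsf{Even}})}\xrightarrow{\mathbb P}1, \] and the same two statements hold with $\mathsf{Even}$ replaced by $\mathsf{Odd}$.
   Context: Setup and notation: - $Q_d=\{0,1\}^d$ is the hypercube graph. - $\mathsf{Even}$ and $\mathsf{Odd}$ are the vertices of even and odd Hamming weight. - $Q_{d,p}$ is obtained by retaining each edge independently with probability $p$. - $N_p(v)$ is the number of neighbors of $v$ in $Q_{d,p}$; for $S$ within one side, $N_p(S)$ is the number of vertices adjacent in $Q_{d,p}$ to some vertex of $S$. - $\Phi_{\mathsf{Even}}=\sum_{v\in\mathsf{Even}}2^{-N_p(v)}$, and $\Phi_{\mathsf{Odd}}$ is defined analogously. - Two same-side vertices are $2$-neighbors if they have a common neighbor in $Q_d$. - $\mathsf{Good}^{\mathsf{Even}}$ is the collection of $S\subseteq\mathsf{Even}$ with $|S|\le 2^d/d^2$ and no two elements being $2$-neighbors; $\mathsf{Good}^{\mathsf{Odd}}$ is defined analogously. - $\mu_p=\tfrac12(2-p)^d$ and $\sigma_p^2=\tfrac12(\tfrac{4-3p}{2})^d$.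 *)

theory Defs
  imports "HOL-Probability.Probability"
begin

text \<open>Vertices of the hypercube Q_d are the subsets of {0..<d} (indicator of a 0/1 vector).\<close>
definition cube :: "nat \<Rightarrow> nat set set" where
  "cube d = Pow {..<d}"

definition evens :: "nat \<Rightarrow> nat set set" where
  "evens d = {x \<in> cube d. even (card x)}"

definition odds :: "nat \<Rightarrow> nat set set" where
  "odds d = {x \<in> cube d. odd (card x)}"

definition hedges :: "nat \<Rightarrow> nat set set set" where
  "hedges d = {{x, y} | x y. x \<in> cube d \<and> y \<in> cube d \<and> card ((x - y) \<union> (y - x)) = 1}"

text \<open>Q_{d,p}: each edge retained independently with probability p; an outcome is the
  indicator function of the retained edges.\<close>
definition Qdp :: "nat \<Rightarrow> real \<Rightarrow> (nat set set \<Rightarrow> bool) pmf" where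
  "Qdp d p = Pi_pmf (hedges d) False (\<lambda>_. bernoulli_pmf p)"

definition Np :: "nat \<Rightarrow> (nat set set \<Rightarrow> bool) \<Rightarrow> nat set set \<Rightarrow> nat" where
  "Np d G S = card {w \<in> cube d. \<exists>v\<in>S. {v, w} \<in> hedges d \<and> G {v, w}}"

definition Phi :: "nat \<Rightarrow> (nat set set \<Rightarrow> bool) \<Rightarrow> nat set set \<Rightarrow> real" where
  "Phi d G V = (\<Sum>v\<in>V. (1/2::real) ^ Np d G {v})"

definition two_nbrs :: "nat \<Rightarrow> nat set \<Rightarrow> nat set \<Rightarrow> bool" where
  "two_nbrs d u v \<longleftrightarrow> u \<noteq> v \<and> (\<exists>w\<in>cube d. {u, w} \<in> hedges d \<and> {v, w} \<in> hedges d)"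

definition Good :: "nat \<Rightarrow> nat set set \<Rightarrow> nat set set set" where
  "Good d V = {S. S \<subseteq> V \<and> real (card S) \<le> 2 ^ d / (real d)\<^sup>2 \<and>
                  (\<forall>u\<in>S. \<forall>v\<in>S. \<not> two_nbrs d u v)}"

definition mu_p :: "real \<Rightarrow> nat \<Rightarrow> real" where
  "mu_p p d = (1/2) * (2 - p) ^ d"

definition sigma_p :: "real \<Rightarrow> nat \<Rightarrow> real" where
  "sigma_p p d = sqrt ((1/2) * ((4 - 3 * p) / 2) ^ d)"

definition zeta_p :: "real \<Rightarrow> real" where
  "zeta_p p = (if p = 2/3 then exp (- 1/4) else 1)"

definition GoodSum :: "nat \<Rightarrow> (nat set set \<Rightarrow> bool) \<Rightarrow> nat set set \<Rightarrow> real" where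
  "GoodSum d G V = (\<Sum>S\<in>Good d V. (1/2::real) ^ Np d G S)"

end

theory Submission
  imports Defs "HOL-Real_Asymp.Real_Asymp"
begin

definition flip :: "nat \<Rightarrow> nat set \<Rightarrow> nat set" where
  "flip i v = (if i \<in> v then v - {i} else insert i v)"

lemma flip_neq: "flip i v \<noteq> v"
  unfolding flip_def by auto

lemma flip_flip[simp]: "flip i (flip i v) = v"
  unfolding flip_def by auto

lemma flip_mem: "j \<in> flip i v \<longleftrightarrow> (if j = i then j \<notin> v else j \<in> v)"
  unfolding flip_def by auto

lemma flip_cube: "v \<in> cube d \<Longrightarrow> i < d \<Longrightarrow> flip i v \<in> cube d"
  unfolding flip_def cube_def by auto

lemma flip_inj: "flip i v = flip j v \<Longrightarrow> i = j"
  by (metis flip_mem)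

lemma cube_finite_elem: "v \<in> cube d \<Longrightarrow> finite v"
  unfolding cube_def by (auto intro: finite_subset)

lemma finite_cube[simp]: "finite (cube d)"
  unfolding cube_def by simp

lemma card_cube: "card (cube d) = 2 ^ d"
  unfolding cube_def by (simp add: card_Pow)

lemma flip_parity: "finite v \<Longrightarrow> even (card (flip i v)) \<longleftrightarrow> \<not> even (card v)"
proof (cases "i \<in> v")
  case True
  assume f: "finite v"
  then have "card v \<ge> 1" using True by (metis card_0_eq empty_iff less_one linorder_not_le)
  then show ?thesis using True f by (auto simp: flip_def card_Diff_singleton)
next
  case False
  assume f: "finite v"
  then show ?thesis using False by (simp add: flip_def)
qed

lemma hedgeI: "v \<in> cube d \<Longrightarrow> i < d \<Longrightarrow> {v, flip i v} \<in> hedges d"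
proof -
  assume v: "v \<in> cube d" and i: "i < d"
  have "(v - flip i v) \<union> (flip i v - v) = {i}" by (auto simp: flip_mem split: if_splits)
  moreover have "flip i v \<in> cube d" using flip_cube v i by blast
  ultimately show ?thesis unfolding hedges_def
    by (intro CollectI exI[of _ v] exI[of _ "flip i v"]) (simp add: v)
qed

lemma hedges_mem: "e \<in> hedges d \<longleftrightarrow> (\<exists>x y. e = {x, y} \<and> x \<in> cube d \<and> y \<in> cube d \<and> card ((x - y) \<union> (y - x)) = 1)"
  unfolding hedges_def by (rule mem_Collect_eq)

lemma hedge_other:
  assumes "e \<in> hedges d" "v \<in> e"
  shows "\<exists>w. e = {v, w}"
proof -
  from assms(1) have "\<exists>x y. e = {x, y}" unfolding hedges_mem by (elim exE conjE) (intro exI)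
  then obtain x y where e: "e = {x, y}" by (elim exE)
  show ?thesis
  proof (cases "v = x")
    case True then show ?thesis using e by (intro exI[of _ y]) simp
  next
    case False then have "v = y" using e assms(2) by simp
    then show ?thesis using e by (intro exI[of _ x]) (simp add: insert_commute)
  qed
qed

lemma hedgeD:
  assumes "{v, w} \<in> hedges d"
  shows "v \<in> cube d \<and> w \<in> cube d \<and> (\<exists>i<d. w = flip i v)"
proof -
  from assms obtain x y where e: "{v, w} = {x, y}" and x: "x \<in> cube d" and y: "y \<in> cube d"
    and c: "card ((x - y) \<union> (y - x)) = 1"
    unfolding hedges_mem by (elim exE conjE)
  have vw: "(v = x \<and> w = y) \<or> (v = y \<and> w = x)" using e by (simp add: doubleton_eq_iff)
  have c2: "card ((v - w) \<union> (w - v)) = 1" using vw c Un_commute by metis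
  then obtain i where i: "(v - w) \<union> (w - v) = {i}" by (rule card_1_singletonE)
  have ii: "((j \<in> v \<and> j \<notin> w) \<or> (j \<in> w \<and> j \<notin> v)) \<longleftrightarrow> j = i" for j
    using arg_cong[OF i, of "\<lambda>S. j \<in> S"] by simp
  have vc: "v \<in> cube d" and wc: "w \<in> cube d" using vw x y by auto
  have "i \<in> v \<union> w" using ii[of i] by blast
  then have "i < d" using vc wc unfolding cube_def by auto
  moreover have "w = flip i v"
  proof (rule set_eqI)
    fix j show "j \<in> w \<longleftrightarrow> j \<in> flip i v"
      using ii[of j] by (cases "j = i") (auto simp: flip_mem)
  qed
  ultimately show ?thesis using vc wc by blast
qed

lemma hedge_parity:
  assumes "{v, w} \<in> hedges d"
  shows "even (card w) \<longleftrightarrow> \<not> even (card v)"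
  using hedgeD[OF assms] flip_parity cube_finite_elem by blast

definition is_side :: "nat \<Rightarrow> nat set set \<Rightarrow> bool" where
  "is_side d V \<longleftrightarrow> V = evens d \<or> V = odds d"

lemma side_sub: "is_side d V \<Longrightarrow> V \<subseteq> cube d"
  unfolding is_side_def evens_def odds_def by auto

lemma side_finite: "is_side d V \<Longrightarrow> finite V"
  by (rule finite_subset[OF side_sub finite_cube])

lemma side_no_edge: "is_side d V \<Longrightarrow> u \<in> V \<Longrightarrow> v \<in> V \<Longrightarrow> {u, v} \<notin> hedges d"
proof
  assume sd: "is_side d V" and uv: "u \<in> V" "v \<in> V" and e: "{u, v} \<in> hedges d"
  have "even (card u) \<longleftrightarrow> even (card v)"
    using sd uv unfolding is_side_def evens_def odds_def by auto
  then show False using hedge_parity[OF e] by simp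
qed

lemma side_edge_le1:
  assumes "is_side d V" "W \<subseteq> V" "e \<in> hedges d"
  shows "W \<inter> e = {} \<or> (\<exists>v. W \<inter> e = {v})"
proof (rule ccontr)
  assume "\<not> ?thesis"
  then obtain u v where uv: "u \<in> W \<inter> e" "v \<in> W \<inter> e" "u \<noteq> v" by blast
  have ue: "u \<in> e" using uv by simp
  have "\<exists>w. e = {u, w}" by (rule hedge_other[OF assms(3) ue])
  then obtain w where w: "e = {u, w}" by (elim exE)
  have "v = w" using uv(2,3) w by simp
  then have "e = {u, v}" using w by simp
  moreover have "u \<in> V" "v \<in> V" using uv assms(2) by auto
  ultimately show False using side_no_edge[OF assms(1), of u v] assms(3) by simp
qed

lemma edges_at: "v \<in> cube d \<Longrightarrow> {e \<in> hedges d. v \<in> e} = (\<lambda>i. {v, flip i v}) ` {..<d}"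
proof (intro equalityI subsetI)
  fix e assume v: "v \<in> cube d" and e: "e \<in> {e \<in> hedges d. v \<in> e}"
  have "\<exists>w. e = {v, w}" using e by (intro hedge_other[of e d]) simp_all
  then obtain w where w: "e = {v, w}" by (elim exE)
  have "{v, w} \<in> hedges d" using e w by simp
  then obtain i where "i < d" "w = flip i v" using hedgeD by blast
  then show "e \<in> (\<lambda>i. {v, flip i v}) ` {..<d}" using w by blast
qed (auto intro: hedgeI)

lemma card_edges_at: "v \<in> cube d \<Longrightarrow> card {e \<in> hedges d. v \<in> e} = d"
proof -
  assume v: "v \<in> cube d"
  have "inj_on (\<lambda>i. {v, flip i v}) {..<d}"
  proof (rule inj_onI)
    fix i j assume "{v, flip i v} = {v, flip j v}"
    then have "flip i v = flip j v" using flip_neq by (metis doubleton_eq_iff)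
    then show "i = j" by (rule flip_inj)
  qed
  then show ?thesis using edges_at[OF v] by (simp add: card_image)
qed

lemma finite_hedges[simp]: "finite (hedges d)"
proof -
  have "hedges d \<subseteq> Pow (cube d)" unfolding hedges_def by auto
  then show ?thesis by (rule finite_subset) simp
qed

lemma card_evens_odds:
  assumes "d \<ge> 1"
  shows "card (evens d) = 2 ^ (d - 1) \<and> card (odds d) = 2 ^ (d - 1)"
proof -
  have b: "bij_betw (flip 0) (evens d) (odds d)"
  proof (rule bij_betw_byWitness[where f'="flip 0"])
    show "\<forall>a\<in>evens d. flip 0 (flip 0 a) = a" by simp
    show "\<forall>a\<in>odds d. flip 0 (flip 0 a) = a" by simp
    show "flip 0 ` evens d \<subseteq> odds d"
      unfolding evens_def odds_def using assms flip_cube flip_parity cube_finite_elem by auto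
    show "flip 0 ` odds d \<subseteq> evens d"
      unfolding evens_def odds_def using assms flip_cube flip_parity cube_finite_elem by auto
  qed
  then have eq: "card (evens d) = card (odds d)" by (rule bij_betw_same_card)
  have U: "evens d \<union> odds d = cube d" and I: "evens d \<inter> odds d = {}"
    unfolding evens_def odds_def by auto
  have F: "finite (evens d)" "finite (odds d)"
    unfolding evens_def odds_def by auto
  have "card (evens d \<union> odds d) = card (evens d) + card (odds d)"
    by (rule card_Un_disjoint[OF F I])
  then have "card (evens d) + card (odds d) = 2 ^ d"
    unfolding U card_cube by simp
  moreover have "(2::nat) ^ d = 2 * 2 ^ (d - 1)" using assms
    by (cases d) simp_all
  ultimately show ?thesis using eq by simp
qed

lemma card_side: "is_side d V \<Longrightarrow> d \<ge> 1 \<Longrightarrow> card V = 2 ^ (d - 1)"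
  unfolding is_side_def using card_evens_odds by auto

definition xv :: "nat \<Rightarrow> (nat set set \<Rightarrow> bool) \<Rightarrow> nat set \<Rightarrow> real" where
  "xv d G v = (1/2::real) ^ Np d G {v}"

lemma prod_if_const: "finite A \<Longrightarrow> (\<Prod>x\<in>A. if P x then c else 1) = c ^ card {x\<in>A. P x}"
  by (simp add: prod.inter_filter[symmetric])

lemma Np_single:
  assumes v: "v \<in> cube d"
  shows "Np d G {v} = card {e \<in> hedges d. v \<in> e \<and> G e}"
proof -
  have "Np d G {v} = card {w \<in> cube d. {v, w} \<in> hedges d \<and> G {v, w}}"
    unfolding Np_def by simp
  also have "\<dots> = card ((\<lambda>w. {v, w}) ` {w \<in> cube d. {v, w} \<in> hedges d \<and> G {v, w}})"
    by (rule card_image[symmetric]) (auto simp: inj_on_def doubleton_eq_iff)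
  also have "(\<lambda>w. {v, w}) ` {w \<in> cube d. {v, w} \<in> hedges d \<and> G {v, w}} = {e \<in> hedges d. v \<in> e \<and> G e}"
  proof (intro equalityI subsetI)
    fix e assume "e \<in> {e \<in> hedges d. v \<in> e \<and> G e}"
    then have e: "e \<in> hedges d" "v \<in> e" "G e" by auto
    have "\<exists>w. e = {v, w}" by (rule hedge_other[OF e(1) e(2)])
    then obtain w where w: "e = {v, w}" by (elim exE)
    have ew: "{v, w} \<in> hedges d" using e(1) w by simp
    have wc: "w \<in> cube d" using hedgeD[OF ew] by simp
    show "e \<in> (\<lambda>w. {v, w}) ` {w \<in> cube d. {v, w} \<in> hedges d \<and> G {v, w}}"
      using e w wc by (intro image_eqI[of _ _ w]) simp_all
  qed auto
  finally show ?thesis .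
qed

lemma xv_pow_prod:
  assumes v: "v \<in> cube d"
  shows "xv d G v ^ k = (\<Prod>e\<in>hedges d. if v \<in> e \<and> G e then (1/2::real) ^ k else 1)"
proof -
  have "(\<Prod>e\<in>hedges d. if v \<in> e \<and> G e then (1/2::real) ^ k else 1) = ((1/2) ^ k) ^ card {e \<in> hedges d. v \<in> e \<and> G e}"
    by (rule prod_if_const) simp
  also have "\<dots> = xv d G v ^ k"
    unfolding xv_def Np_single[OF v] by (simp add: power_mult[symmetric] mult.commute)
  finally show ?thesis by simp
qed

lemma xv_nonneg: "0 \<le> xv d G v" unfolding xv_def by simp
lemma xv_le1: "xv d G v \<le> 1" unfolding xv_def by (simp add: power_le_one)

lemma finite_set_Qdp: "finite (set_pmf (Qdp d p))"
  unfolding Qdp_def by (subst set_Pi_pmf) (auto intro!: finite_PiE_dflt)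

lemma integrable_Qdp[simp]: "integrable (measure_pmf (Qdp d p)) (f :: _ \<Rightarrow> real)"
  by (rule integrable_measure_pmf_finite[OF finite_set_Qdp])

lemma moment:
  assumes sd: "is_side d V" and W: "W \<subseteq> V" and p: "0 \<le> p" "p \<le> 1"
  shows "measure_pmf.expectation (Qdp d p) (\<lambda>G. \<Prod>v\<in>W. xv d G v ^ k v)
       = (\<Prod>v\<in>W. (1 - p + p * (1/2) ^ k v) ^ d)"
proof -
  define c where "c v = (1/2::real) ^ k v" for v
  define a where "a v = 1 - p + p * c v" for v
  define g where "g e b = (\<Prod>v\<in>W. if v \<in> e \<and> b then c v else 1)" for e b
  have finW: "finite W" using side_finite[OF sd] W finite_subset by blast
  have Wc: "W \<subseteq> cube d" using side_sub[OF sd] W by blast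
  have eq: "(\<Prod>v\<in>W. xv d G v ^ k v) = (\<Prod>e\<in>hedges d. g e (G e))" for G
  proof -
    have "(\<Prod>v\<in>W. xv d G v ^ k v) = (\<Prod>v\<in>W. \<Prod>e\<in>hedges d. if v \<in> e \<and> G e then c v else 1)"
    proof (rule prod.cong[OF refl])
      fix v assume "v \<in> W"
      then have "v \<in> cube d" using Wc by blast
      then show "xv d G v ^ k v = (\<Prod>e\<in>hedges d. if v \<in> e \<and> G e then c v else 1)"
        unfolding c_def by (rule xv_pow_prod)
    qed
    also have "\<dots> = (\<Prod>e\<in>hedges d. \<Prod>v\<in>W. if v \<in> e \<and> G e then c v else 1)"
      by (rule prod.swap)
    finally show ?thesis unfolding g_def .
  qed
  have "measure_pmf.expectation (Qdp d p) (\<lambda>G. \<Prod>v\<in>W. xv d G v ^ k v)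
      = measure_pmf.expectation (Qdp d p) (\<lambda>G. \<Prod>e\<in>hedges d. g e (G e))"
    by (simp add: eq)
  also have "\<dots> = (\<Prod>e\<in>hedges d. measure_pmf.expectation (bernoulli_pmf p) (g e))"
    unfolding Qdp_def
    by (rule expectation_prod_Pi_pmf)
       (auto simp: g_def c_def intro!: prod_nonneg integrable_measure_pmf_finite)
  also have "\<dots> = (\<Prod>e\<in>hedges d. \<Prod>v\<in>W. if v \<in> e then a v else 1)"
  proof (rule prod.cong[OF refl])
    fix e assume e: "e \<in> hedges d"
    have gF: "g e False = 1" unfolding g_def by simp
    have "measure_pmf.expectation (bernoulli_pmf p) (g e) = g e True * p + g e False * (1 - p)"
      using p by simp
    also have "\<dots> = (\<Prod>v\<in>W. if v \<in> e then a v else 1)"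
    proof (cases "W \<inter> e = {}")
      case True
      then have "g e True = 1" "(\<Prod>v\<in>W. if v \<in> e then a v else 1) = 1"
        unfolding g_def by (auto intro!: prod.neutral)
      then show ?thesis using gF by simp
    next
      case False
      then obtain v0 where v0: "W \<inter> e = {v0}" using side_edge_le1[OF sd W e] by blast
      have s: "{v \<in> W. v \<in> e} = {v0}" using v0 by auto
      have "g e True = c v0"
        unfolding g_def using prod.inter_filter[OF finW, of c "\<lambda>v. v \<in> e"] s by simp
      moreover have "(\<Prod>v\<in>W. if v \<in> e then a v else 1) = a v0"
        using prod.inter_filter[OF finW, of a "\<lambda>v. v \<in> e"] s by simp
      ultimately show ?thesis using gF by (simp add: a_def algebra_simps)
    qed
    finally show "measure_pmf.expectation (bernoulli_pmf p) (g e) = (\<Prod>v\<in>W. if v \<in> e then a v else 1)" .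
  qed
  also have "\<dots> = (\<Prod>v\<in>W. \<Prod>e\<in>hedges d. if v \<in> e then a v else 1)"
    by (rule prod.swap)
  also have "\<dots> = (\<Prod>v\<in>W. a v ^ d)"
  proof (rule prod.cong[OF refl])
    fix v assume "v \<in> W"
    then have v: "v \<in> cube d" using Wc by blast
    show "(\<Prod>e\<in>hedges d. if v \<in> e then a v else 1) = a v ^ d"
      by (simp add: prod_if_const card_edges_at[OF v])
  qed
  finally show ?thesis unfolding a_def c_def .
qed

lemma ln_lower: assumes "0 \<le> (x::real)" shows "x - x^2/2 \<le> ln (1 + x)"
proof -
  define f where "f t = ln (1 + t) - t + t^2/2" for t :: real
  have "f 0 \<le> f x"
  proof (rule DERIV_nonneg_imp_nondecreasing[OF assms])
    fix t :: real assume t: "0 \<le> t" "t \<le> x"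
    have "(f has_real_derivative (1/(1+t) - 1 + t)) (at t)"
      unfolding f_def using t by (auto intro!: derivative_eq_intros)
    moreover have "1/(1+t) - 1 + t = t^2/(1+t)" using t by (simp add: field_simps power2_eq_square)
    moreover have "t^2/(1+t) \<ge> 0" using t by simp
    ultimately show "\<exists>y. (f has_real_derivative y) (at t) \<and> 0 \<le> y" by auto
  qed
  then show ?thesis unfolding f_def by simp
qed

lemma ln_upper: assumes "0 \<le> (x::real)" shows "ln (1 + x) \<le> x - x^2/2 + x^3/3"
proof -
  define f where "f t = t - t^2/2 + t^3/3 - ln (1 + t)" for t :: real
  have "f 0 \<le> f x"
  proof (rule DERIV_nonneg_imp_nondecreasing[OF assms])
    fix t :: real assume t: "0 \<le> t" "t \<le> x"
    have "(f has_real_derivative (1 - t + t^2 - 1/(1+t))) (at t)"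
      unfolding f_def using t by (auto intro!: derivative_eq_intros simp: power2_eq_square)
    moreover have "1 - t + t^2 - 1/(1+t) = t^3/(1+t)" using t by (simp add: field_simps power2_eq_square power3_eq_cube)
    moreover have "t^3/(1+t) \<ge> 0" using t by simp
    ultimately show "\<exists>y. (f has_real_derivative y) (at t) \<and> 0 \<le> y" by auto
  qed
  then show ?thesis unfolding f_def by simp
qed

lemma exp_lower1: "0 \<le> (x::real) \<Longrightarrow> exp (x - x^2/2) \<le> 1 + x"
  using ln_lower by (metis add_nonneg_nonneg exp_le_cancel_iff exp_ln le_add_same_cancel1 zero_less_one add_pos_nonneg)

lemma exp_upper1: "0 \<le> (x::real) \<Longrightarrow> 1 + x \<le> exp (x - x^2/2 + x^3/3)"
  using ln_upper by (metis exp_le_cancel_iff exp_ln add_pos_nonneg zero_less_one)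

definition T2 :: "nat \<Rightarrow> nat set set \<Rightarrow> nat set \<Rightarrow> nat set set" where
  "T2 d V u = {v \<in> V. two_nbrs d u v}"

definition Bsum :: "nat \<Rightarrow> (nat set set \<Rightarrow> bool) \<Rightarrow> nat set set \<Rightarrow> real" where
  "Bsum d G V = (\<Sum>u\<in>V. \<Sum>v\<in>T2 d V u. xv d G u * xv d G v)"

lemma Np_disjoint:
  assumes S: "S \<subseteq> cube d" and nb: "\<forall>u\<in>S. \<forall>v\<in>S. \<not> two_nbrs d u v"
  shows "Np d G S = (\<Sum>v\<in>S. Np d G {v})"
proof -
  define N where "N v = {w \<in> cube d. {v, w} \<in> hedges d \<and> G {v, w}}" for v
  have finS: "finite S" using S finite_subset finite_cube by blast
  have eq: "{w \<in> cube d. \<exists>v\<in>S. {v, w} \<in> hedges d \<and> G {v, w}} = \<Union>(N ` S)"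
    unfolding N_def by auto
  have "card (\<Union>(N ` S)) = (\<Sum>v\<in>S. card (N v))"
  proof (rule card_UN_disjoint[OF finS])
    show "\<forall>i\<in>S. finite (N i)" unfolding N_def by simp
    show "\<forall>i\<in>S. \<forall>j\<in>S. i \<noteq> j \<longrightarrow> N i \<inter> N j = {}"
    proof (intro ballI impI)
      fix i j assume ij: "i \<in> S" "j \<in> S" "i \<noteq> j"
      have "\<not> two_nbrs d i j" using nb ij by blast
      then show "N i \<inter> N j = {}" using ij(3) unfolding N_def two_nbrs_def by blast
    qed
  qed
  moreover have "Np d G {v} = card (N v)" for v unfolding Np_def N_def by simp
  ultimately show ?thesis unfolding Np_def eq by simp
qed

lemma GoodSum_eq:
  assumes sd: "is_side d V"
  shows "GoodSum d G V = (\<Sum>S\<in>Good d V. \<Prod>v\<in>S. xv d G v)"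
  unfolding GoodSum_def
proof (rule sum.cong[OF refl])
  fix S assume "S \<in> Good d V"
  then have S: "S \<subseteq> V" and nb: "\<forall>u\<in>S. \<forall>v\<in>S. \<not> two_nbrs d u v" unfolding Good_def by auto
  have Sc: "S \<subseteq> cube d" using S side_sub[OF sd] by blast
  show "(1/2::real) ^ Np d G S = (\<Prod>v\<in>S. xv d G v)"
    unfolding Np_disjoint[OF Sc nb] power_sum xv_def ..
qed

lemma prod_pow_sum: "finite V \<Longrightarrow> (\<Prod>v\<in>V. 1 + f v) = (\<Sum>S\<in>Pow V. \<Prod>v\<in>S. (f v :: real))"
  using prod_add[of V f "\<lambda>_. 1"] by (simp add: add.commute)

lemma prod_pair_sum:
  fixes f :: "'a \<Rightarrow> real"
  assumes fin: "finite V" and uv: "u \<in> V" "v \<in> V"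
  shows "(\<Sum>S\<in>Pow V. (if u \<in> S \<and> v \<in> S then 1 else 0) * (\<Prod>w\<in>S. f w))
       = (\<Prod>w\<in>V. f w + (if w = u \<or> w = v then 0 else 1))"
proof -
  define g where "g w = (if w = u \<or> w = v then 0 else (1::real))" for w
  have "(\<Prod>w\<in>V. f w + g w) = (\<Sum>S\<in>Pow V. (\<Prod>w\<in>S. f w) * (\<Prod>w\<in>V - S. g w))"
    by (rule prod_add[OF fin])
  also have "\<dots> = (\<Sum>S\<in>Pow V. (if u \<in> S \<and> v \<in> S then 1 else 0) * (\<Prod>w\<in>S. f w))"
  proof (rule sum.cong[OF refl])
    fix S assume S: "S \<in> Pow V"
    have "(\<Prod>w\<in>V - S. g w) = (if u \<in> S \<and> v \<in> S then 1 else 0)"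
    proof (cases "u \<in> S \<and> v \<in> S")
      case True
      then have "(\<Prod>w\<in>V - S. g w) = 1" by (intro prod.neutral) (auto simp: g_def)
      then show ?thesis using True by simp
    next
      case False
      then have "\<exists>w\<in>V - S. g w = 0" using uv by (auto simp: g_def)
      then have "(\<Prod>w\<in>V - S. g w) = 0" using fin by (simp add: prod_zero_iff)
      then show ?thesis using False by simp
    qed
    then show "(\<Prod>w\<in>S. f w) * (\<Prod>w\<in>V - S. g w) = (if u \<in> S \<and> v \<in> S then 1 else 0) * (\<Prod>w\<in>S. f w)"
      by simp
  qed
  finally show ?thesis unfolding g_def by simp
qed

lemma pair_le:
  fixes f :: "'a \<Rightarrow> real"
  assumes fin: "finite V" and uv: "u \<in> V" "v \<in> V" "u \<noteq> v" and f: "\<And>w. 0 \<le> f w"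
  shows "(\<Prod>w\<in>V. f w + (if w = u \<or> w = v then 0 else 1)) \<le> f u * f v * (\<Prod>w\<in>V. 1 + f w)"
proof -
  have "(\<Prod>w\<in>V. f w + (if w = u \<or> w = v then 0 else 1))
      \<le> (\<Prod>w\<in>V. (if w = u \<or> w = v then f w else 1) * (1 + f w))"
  proof (rule prod_mono)
    fix w assume "w \<in> V"
    show "0 \<le> f w + (if w = u \<or> w = v then 0 else 1) \<and>
          f w + (if w = u \<or> w = v then 0 else 1) \<le> (if w = u \<or> w = v then f w else 1) * (1 + f w)"
      using f[of w] by (auto simp: algebra_simps)
  qed
  also have "\<dots> = (\<Prod>w\<in>V. if w = u \<or> w = v then f w else 1) * (\<Prod>w\<in>V. 1 + f w)"
    by (rule prod.distrib)
  also have "(\<Prod>w\<in>V. if w = u \<or> w = v then f w else 1) = (\<Prod>w\<in>{w\<in>V. w = u \<or> w = v}. f w)"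
    using prod.inter_filter[OF fin, of f "\<lambda>w. w = u \<or> w = v"] by simp
  also have "{w\<in>V. w = u \<or> w = v} = {u, v}" using uv by auto
  also have "(\<Prod>w\<in>{u, v}. f w) = f u * f v" using uv by simp
  finally show ?thesis .
qed

lemma tail_le:
  fixes f :: "'a \<Rightarrow> real"
  assumes fin: "finite V" and f: "\<And>w. 0 \<le> f w"
  shows "(\<Sum>S\<in>Pow V. (if M < real (card S) then 1 else 0) * (\<Prod>w\<in>S. f w))
       \<le> exp (- M) * exp (exp 1 * (\<Sum>w\<in>V. f w))"
proof -
  have "(\<Sum>S\<in>Pow V. (if M < real (card S) then 1 else 0) * (\<Prod>w\<in>S. f w))
      \<le> (\<Sum>S\<in>Pow V. exp (- M) * (\<Prod>w\<in>S. exp 1 * f w))"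
  proof (rule sum_mono)
    fix S assume S: "S \<in> Pow V"
    have "(\<Prod>w\<in>S. exp 1 * f w) = exp 1 ^ card S * (\<Prod>w\<in>S. f w)"
      by (simp add: prod.distrib)
    also have "exp 1 ^ card S = exp (real (card S))"
      using exp_of_nat_mult[of "card S" "1::real"] by simp
    finally have eq: "exp (- M) * (\<Prod>w\<in>S. exp 1 * f w) = exp (real (card S) - M) * (\<Prod>w\<in>S. f w)"
      by (simp add: exp_diff exp_minus field_simps)
    have pn: "0 \<le> (\<Prod>w\<in>S. f w)" using f by (simp add: prod_nonneg)
    have "(if M < real (card S) then 1 else 0) \<le> exp (real (card S) - M)"
      by auto
    then show "(if M < real (card S) then 1 else 0) * (\<Prod>w\<in>S. f w) \<le> exp (- M) * (\<Prod>w\<in>S. exp 1 * f w)"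
      unfolding eq using pn by (rule mult_right_mono)
  qed
  also have "\<dots> = exp (- M) * (\<Prod>w\<in>V. 1 + exp 1 * f w)"
    by (simp add: prod_pow_sum[OF fin] sum_distrib_left)
  also have "(\<Prod>w\<in>V. 1 + exp 1 * f w) \<le> (\<Prod>w\<in>V. exp (exp 1 * f w))"
    by (rule prod_mono) (use f in \<open>auto intro: exp_ge_add_one_self add_nonneg_nonneg\<close>)
  also have "\<dots> = exp (exp 1 * (\<Sum>w\<in>V. f w))"
    by (simp add: exp_sum[OF fin] sum_distrib_left)
  finally show ?thesis by simp
qed

lemma Phi_eq: "Phi d G V = (\<Sum>v\<in>V. xv d G v)"
  unfolding Phi_def xv_def ..

lemma det_bounds:
  fixes d :: nat and G :: "nat set set \<Rightarrow> bool" and V :: "nat set set"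
  assumes sd: "is_side d V"
  defines "x \<equiv> xv d G"
  defines "\<Phi> \<equiv> Phi d G V"
  defines "Q \<equiv> (\<Sum>v\<in>V. x v ^ 2)"
  defines "C \<equiv> (\<Sum>v\<in>V. x v ^ 3)"
  defines "B \<equiv> Bsum d G V"
  defines "F \<equiv> GoodSum d G V"
  defines "M \<equiv> 2 ^ d / (real d)\<^sup>2"
  shows "F / exp \<Phi> \<le> 1" "F / exp \<Phi> \<le> exp (- Q / 2 + C / 3)"
    "exp (- Q / 2) - B - exp (- M + (exp 1 - 1) * \<Phi>) \<le> F / exp \<Phi>"
proof -
  have fin: "finite V" by (rule side_finite[OF sd])
  have x0: "\<And>v. 0 \<le> x v" and x1: "\<And>v. x v \<le> 1" unfolding x_def by (auto simp: xv_nonneg xv_le1)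
  define P where "P = (\<Prod>v\<in>V. 1 + x v)"
  have Phi': "\<Phi> = (\<Sum>v\<in>V. x v)" unfolding \<Phi>_def x_def Phi_eq ..
  have P1: "P \<le> exp \<Phi>"
  proof -
    have "P \<le> (\<Prod>v\<in>V. exp (x v))" unfolding P_def
      by (rule prod_mono) (use x0 in \<open>auto intro: exp_ge_add_one_self add_nonneg_nonneg\<close>)
    then show ?thesis by (simp add: Phi' exp_sum[OF fin])
  qed
  have P2: "P \<le> exp (\<Phi> - Q/2 + C/3)"
  proof -
    have "P \<le> (\<Prod>v\<in>V. exp (x v - (x v)^2/2 + (x v)^3/3))" unfolding P_def
      by (rule prod_mono) (use x0 in \<open>auto intro: exp_upper1 add_nonneg_nonneg\<close>)
    also have "\<dots> = exp (\<Sum>v\<in>V. x v - (x v)^2/2 + (x v)^3/3)" by (simp add: exp_sum[OF fin])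
    also have "(\<Sum>v\<in>V. x v - (x v)^2/2 + (x v)^3/3) = \<Phi> - Q/2 + C/3"
      unfolding Phi' Q_def C_def by (simp add: sum.distrib sum_subtractf sum_divide_distrib)
    finally show ?thesis .
  qed
  have P3: "exp (\<Phi> - Q/2) \<le> P"
  proof -
    have "exp (\<Phi> - Q/2) = exp (\<Sum>v\<in>V. x v - (x v)^2/2)"
      unfolding Phi' Q_def by (simp add: sum_subtractf sum_divide_distrib)
    also have "\<dots> = (\<Prod>v\<in>V. exp (x v - (x v)^2/2))" by (simp add: exp_sum[OF fin])
    also have "\<dots> \<le> P" unfolding P_def
      by (rule prod_mono) (use x0 in \<open>auto intro: exp_lower1\<close>)
    finally show ?thesis .
  qed
  have Fe: "F = (\<Sum>S\<in>Good d V. \<Prod>v\<in>S. x v)" unfolding F_def x_def by (rule GoodSum_eq[OF sd])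
  have GP: "Good d V \<subseteq> Pow V" unfolding Good_def by auto
  have finP: "finite (Pow V)" using fin by simp
  have Pe: "P = (\<Sum>S\<in>Pow V. \<Prod>v\<in>S. x v)" unfolding P_def by (rule prod_pow_sum[OF fin])
  have pn: "\<And>S. 0 \<le> (\<Prod>v\<in>S. x v)" using x0 by (simp add: prod_nonneg)
  have FP: "F \<le> P" unfolding Fe Pe by (rule sum_mono2[OF finP GP]) (simp add: pn)
  define ind1 where "ind1 S = (if M < real (card S) then 1 else (0::real))" for S :: "nat set set"
  define ind2 where "ind2 u v S = (if u \<in> S \<and> v \<in> S then 1 else (0::real))" for u v :: "nat set" and S
  define coef where "coef S = ind1 S + (\<Sum>u\<in>V. \<Sum>v\<in>T2 d V u. ind2 u v S)" for S
  have finT: "finite (T2 d V u)" for u unfolding T2_def using fin by simp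
  have coef0: "0 \<le> coef S" for S unfolding coef_def ind1_def ind2_def
    by (intro add_nonneg_nonneg sum_nonneg) auto
  have coef1: "1 \<le> coef S" if S: "S \<in> Pow V - Good d V" for S
  proof -
    have SV: "S \<subseteq> V" and nG: "S \<notin> Good d V" using S by auto
    have s0: "0 \<le> (\<Sum>u\<in>V. \<Sum>v\<in>T2 d V u. ind2 u v S)" unfolding ind2_def by (intro sum_nonneg) auto
    show ?thesis
    proof (cases "M < real (card S)")
      case True
      then show ?thesis unfolding coef_def ind1_def using s0 by simp
    next
      case False
      then have "real (card S) \<le> 2 ^ d / (real d)\<^sup>2" unfolding M_def by simp
      then obtain u v where uv: "u \<in> S" "v \<in> S" "two_nbrs d u v" using nG SV unfolding Good_def by auto
      have vT: "v \<in> T2 d V u" unfolding T2_def using uv SV by auto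
      have uV: "u \<in> V" using uv SV by auto
      have "1 = ind2 u v S" unfolding ind2_def using uv by simp
      also have "\<dots> \<le> (\<Sum>v\<in>T2 d V u. ind2 u v S)"
        by (rule member_le_sum[OF vT]) (auto simp: ind2_def finT)
      also have "\<dots> \<le> (\<Sum>u\<in>V. \<Sum>v\<in>T2 d V u. ind2 u v S)"
        by (rule member_le_sum[OF uV]) (auto simp: ind2_def fin intro: sum_nonneg)
      also have "\<dots> \<le> coef S" unfolding coef_def ind1_def by simp
      finally show ?thesis .
    qed
  qed
  have PF: "P - F \<le> exp (- M) * exp (exp 1 * \<Phi>) + B * P"
  proof -
    have "P - F = (\<Sum>S\<in>Pow V - Good d V. \<Prod>v\<in>S. x v)"
      unfolding Fe Pe by (rule sum_diff[OF finP GP, symmetric])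
    also have "\<dots> \<le> (\<Sum>S\<in>Pow V - Good d V. coef S * (\<Prod>v\<in>S. x v))"
    proof (rule sum_mono)
      fix S assume S: "S \<in> Pow V - Good d V"
      show "(\<Prod>v\<in>S. x v) \<le> coef S * (\<Prod>v\<in>S. x v)"
        using mult_right_mono[OF coef1[OF S] pn[of S]] by simp
    qed
    also have "\<dots> \<le> (\<Sum>S\<in>Pow V. coef S * (\<Prod>v\<in>S. x v))"
      by (rule sum_mono2[OF finP]) (auto intro: mult_nonneg_nonneg coef0 pn)
    also have "\<dots> = (\<Sum>S\<in>Pow V. ind1 S * (\<Prod>v\<in>S. x v))
        + (\<Sum>u\<in>V. \<Sum>v\<in>T2 d V u. \<Sum>S\<in>Pow V. ind2 u v S * (\<Prod>w\<in>S. x w))"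
      unfolding coef_def
      by (simp add: distrib_right sum.distrib sum_distrib_right sum.swap[of _ "Pow V"])
    also have "(\<Sum>S\<in>Pow V. ind1 S * (\<Prod>v\<in>S. x v)) \<le> exp (- M) * exp (exp 1 * \<Phi>)"
      unfolding ind1_def Phi' by (rule tail_le[OF fin x0])
    also have "(\<Sum>u\<in>V. \<Sum>v\<in>T2 d V u. \<Sum>S\<in>Pow V. ind2 u v S * (\<Prod>w\<in>S. x w))
        \<le> (\<Sum>u\<in>V. \<Sum>v\<in>T2 d V u. x u * x v * P)"
    proof (intro sum_mono)
      fix u v assume u: "u \<in> V" and v: "v \<in> T2 d V u"
      have vV: "v \<in> V" and uv: "u \<noteq> v" using v unfolding T2_def two_nbrs_def by auto
      have "(\<Sum>S\<in>Pow V. ind2 u v S * (\<Prod>w\<in>S. x w)) = (\<Prod>w\<in>V. x w + (if w = u \<or> w = v then 0 else 1))"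
        unfolding ind2_def by (rule prod_pair_sum[OF fin u vV])
      also have "\<dots> \<le> x u * x v * P" unfolding P_def by (rule pair_le[OF fin u vV uv x0])
      finally show "(\<Sum>S\<in>Pow V. ind2 u v S * (\<Prod>w\<in>S. x w)) \<le> x u * x v * P" .
    qed
    also have "(\<Sum>u\<in>V. \<Sum>v\<in>T2 d V u. x u * x v * P) = B * P"
      unfolding B_def Bsum_def x_def by (simp add: sum_distrib_right)
    finally show ?thesis by simp
  qed
  have B0: "0 \<le> B" unfolding B_def Bsum_def by (intro sum_nonneg mult_nonneg_nonneg xv_nonneg)
  have P0: "0 \<le> P" unfolding P_def using x0 by (simp add: prod_nonneg add_nonneg_nonneg)
  have ePos: "0 < exp \<Phi>" by simp
  show "F / exp \<Phi> \<le> 1" using FP P1 ePos by simp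
  show "F / exp \<Phi> \<le> exp (- Q / 2 + C / 3)"
  proof -
    have "F \<le> exp (\<Phi> - Q/2 + C/3)" using FP P2 by simp
    also have "\<dots> = exp (- Q / 2 + C / 3) * exp \<Phi>" by (simp add: exp_add[symmetric] algebra_simps)
    finally show ?thesis using ePos by (simp add: divide_le_eq)
  qed
  show "exp (- Q / 2) - B - exp (- M + (exp 1 - 1) * \<Phi>) \<le> F / exp \<Phi>"
  proof -
    have "exp \<Phi> * (exp (- Q / 2) - B - exp (- M + (exp 1 - 1) * \<Phi>))
        = exp (\<Phi> - Q/2) - B * exp \<Phi> - exp (- M) * exp (exp 1 * \<Phi>)"
      by (simp add: algebra_simps exp_add[symmetric])
    also have "\<dots> \<le> P - B * P - exp (- M) * exp (exp 1 * \<Phi>)"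
      using P3 P1 B0 by (smt (verit) mult_left_mono)
    also have "\<dots> \<le> F" using PF by simp
    finally show ?thesis using ePos by (simp add: le_divide_eq mult.commute)
  qed
qed

lemma pmf_const_int: "measure_pmf.expectation (M :: 'a pmf) (\<lambda>_. c) = (c::real)"
  by simp

lemma markov:
  fixes M :: "'a pmf" and X :: "'a \<Rightarrow> real"
  assumes fin: "finite (set_pmf M)" and X0: "\<And>w. 0 \<le> X w" and c: "0 < c"
  shows "measure_pmf.prob M {w. c < X w} \<le> measure_pmf.expectation M X / c"
proof -
  have "measure_pmf.prob M {w. c < X w} \<le> measure_pmf.prob M {w \<in> space (measure_pmf M). X w \<ge> c}"
    by (rule measure_pmf.finite_measure_mono) auto
  also have "\<dots> \<le> measure_pmf.expectation M X / c"
    by (rule integral_Markov_inequality_measure[where A = UNIV])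
       (auto simp: X0 c integrable_measure_pmf_finite[OF fin])
  finally show ?thesis .
qed

lemma var_bound:
  fixes M :: "'a pmf" and f :: "'b \<Rightarrow> 'a \<Rightarrow> real"
  assumes fin: "finite (set_pmf M)" and finV: "finite V"
    and Ea: "\<And>u. u \<in> V \<Longrightarrow> measure_pmf.expectation M (f u) = a"
    and Eab: "\<And>u v. u \<in> V \<Longrightarrow> v \<in> V \<Longrightarrow> u \<noteq> v \<Longrightarrow> measure_pmf.expectation M (\<lambda>w. f u w * f v w) = a^2"
    and Eb: "\<And>u. u \<in> V \<Longrightarrow> measure_pmf.expectation M (\<lambda>w. f u w ^ 2) = b"
  shows "measure_pmf.expectation M (\<lambda>w. ((\<Sum>v\<in>V. f v w) - real (card V) * a)^2) \<le> real (card V) * b"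
proof -
  have int: "\<And>g :: 'a \<Rightarrow> real. integrable M g" by (rule integrable_measure_pmf_finite[OF fin])
  define n where "n = real (card V)"
  have ES: "measure_pmf.expectation M (\<lambda>w. \<Sum>v\<in>V. f v w) = n * a"
    using Ea by (simp add: int n_def)
  have inner: "measure_pmf.expectation M (\<lambda>w. \<Sum>v\<in>V. f u w * f v w) = b + (n - 1) * a^2" if u: "u \<in> V" for u
  proof -
    have "measure_pmf.expectation M (\<lambda>w. \<Sum>v\<in>V. f u w * f v w)
        = (\<Sum>v\<in>V. measure_pmf.expectation M (\<lambda>w. f u w * f v w))"
      by (simp add: int)
    also have "\<dots> = measure_pmf.expectation M (\<lambda>w. f u w * f u w) + (\<Sum>v\<in>V - {u}. measure_pmf.expectation M (\<lambda>w. f u w * f v w))"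
      using u finV by (simp add: sum.remove)
    also have "(\<Sum>v\<in>V - {u}. measure_pmf.expectation M (\<lambda>w. f u w * f v w)) = (\<Sum>v\<in>V - {u}. a^2)"
      using u by (intro sum.cong refl Eab) auto
    also have "\<dots> = (n - 1) * a^2"
    proof -
      have "card V \<ge> 1" using u finV by (metis card_0_eq empty_iff less_one not_le)
      then show ?thesis using u finV by (simp add: n_def of_nat_diff card_Diff_singleton)
    qed
    also have "measure_pmf.expectation M (\<lambda>w. f u w * f u w) = b"
      using Eb[OF u] by (simp add: power2_eq_square)
    finally show ?thesis .
  qed
  have ES2: "measure_pmf.expectation M (\<lambda>w. (\<Sum>v\<in>V. f v w)^2) = n * (b + (n - 1) * a^2)"
  proof -
    have "(\<lambda>w. (\<Sum>v\<in>V. f v w)^2) = (\<lambda>w. \<Sum>u\<in>V. \<Sum>v\<in>V. f u w * f v w)"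
      by (simp add: power2_eq_square sum_product)
    then have "measure_pmf.expectation M (\<lambda>w. (\<Sum>v\<in>V. f v w)^2)
        = (\<Sum>u\<in>V. measure_pmf.expectation M (\<lambda>w. \<Sum>v\<in>V. f u w * f v w))"
      by (simp add: int)
    also have "\<dots> = (\<Sum>u\<in>V. b + (n - 1) * a^2)" by (intro sum.cong refl inner)
    also have "\<dots> = n * (b + (n - 1) * a^2)" by (simp add: n_def)
    finally show ?thesis .
  qed
  have "(\<lambda>w. ((\<Sum>v\<in>V. f v w) - n * a)^2)
      = (\<lambda>w. (\<Sum>v\<in>V. f v w)^2 - 2 * (n * a) * (\<Sum>v\<in>V. f v w) + (n * a)^2)"
    by (rule ext) (simp add: power2_diff algebra_simps)
  then have "measure_pmf.expectation M (\<lambda>w. ((\<Sum>v\<in>V. f v w) - n * a)^2)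
      = measure_pmf.expectation M (\<lambda>w. (\<Sum>v\<in>V. f v w)^2) - 2 * (n * a) * measure_pmf.expectation M (\<lambda>w. \<Sum>v\<in>V. f v w) + (n * a)^2"
    by (simp add: int del: integral_sum')
  also have "\<dots> = n * b - n * a^2" unfolding ES2 ES by (simp add: algebra_simps power2_eq_square)
  also have "\<dots> \<le> n * b" by (simp add: n_def)
  finally show ?thesis unfolding n_def .
qed

definition cc :: "real \<Rightarrow> nat \<Rightarrow> real" where "cc p k = 1 - p + p * (1/2) ^ k"

context
  fixes d :: nat and p :: real and V :: "nat set set"
  assumes sd: "is_side d V" and p0: "0 \<le> p" and p1: "p \<le> 1"
begin

lemma E_single: "v \<in> V \<Longrightarrow> measure_pmf.expectation (Qdp d p) (\<lambda>G. xv d G v ^ k) = cc p k ^ d"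
  using moment[OF sd _ p0 p1, of "{v}" "\<lambda>_. k"] by (simp add: cc_def)

lemma E_pair: "u \<in> V \<Longrightarrow> v \<in> V \<Longrightarrow> u \<noteq> v \<Longrightarrow>
   measure_pmf.expectation (Qdp d p) (\<lambda>G. xv d G u ^ k * xv d G v ^ k) = (cc p k ^ d)^2"
  using moment[OF sd _ p0 p1, of "{u, v}" "\<lambda>_. k"] by (simp add: cc_def power2_eq_square)

lemma E_sum_pow: "measure_pmf.expectation (Qdp d p) (\<lambda>G. \<Sum>v\<in>V. xv d G v ^ k) = real (card V) * cc p k ^ d"
  using E_single by simp

lemma E_Phi: "measure_pmf.expectation (Qdp d p) (\<lambda>G. Phi d G V) = real (card V) * cc p 1 ^ d"
  using E_sum_pow[of 1] by (simp add: Phi_eq)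

lemma Var_Phi: "measure_pmf.expectation (Qdp d p) (\<lambda>G. (Phi d G V - real (card V) * cc p 1 ^ d)^2)
    \<le> real (card V) * cc p 2 ^ d"
proof -
  have "measure_pmf.expectation (Qdp d p) (\<lambda>G. ((\<Sum>v\<in>V. xv d G v) - real (card V) * cc p 1 ^ d)^2)
    \<le> real (card V) * cc p 2 ^ d"
    by (rule var_bound[OF finite_set_Qdp side_finite[OF sd], where f = "\<lambda>u G. xv d G u"])
       (use E_single[of _ 1] E_single[of _ 2] E_pair[of _ _ 1] in auto)
  then show ?thesis by (simp add: Phi_eq)
qed

lemma Var_Q: "measure_pmf.expectation (Qdp d p) (\<lambda>G. ((\<Sum>v\<in>V. xv d G v ^ 2) - real (card V) * cc p 2 ^ d)^2)
    \<le> real (card V) * cc p 4 ^ d"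
proof (rule var_bound[OF finite_set_Qdp side_finite[OF sd], where f = "\<lambda>u G. xv d G u ^ 2"])
  show "measure_pmf.expectation (Qdp d p) (\<lambda>G. (xv d G u ^ 2)^2) = cc p 4 ^ d" if "u \<in> V" for u
    using E_single[OF that, of 4] by (simp add: power_mult[symmetric])
qed (use E_single[of _ 2] E_pair[of _ _ 2] in auto)

lemma card_T2: "u \<in> cube d \<Longrightarrow> card (T2 d V u) \<le> d * d"
proof -
  assume u: "u \<in> cube d"
  have "T2 d V u \<subseteq> (\<lambda>(i, j). flip j (flip i u)) ` ({..<d} \<times> {..<d})"
  proof
    fix v assume "v \<in> T2 d V u"
    then obtain w where w: "w \<in> cube d" "{u, w} \<in> hedges d" "{v, w} \<in> hedges d"
      unfolding T2_def two_nbrs_def by blast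
    obtain i where i: "i < d" "w = flip i u" using hedgeD[OF w(2)] by blast
    obtain j where j: "j < d" "w = flip j v" using hedgeD[OF w(3)] by blast
    have "v = flip j (flip i u)" using i j by (metis flip_flip)
    then show "v \<in> (\<lambda>(i, j). flip j (flip i u)) ` ({..<d} \<times> {..<d})" using i j by force
  qed
  then have "card (T2 d V u) \<le> card ((\<lambda>(i, j). flip j (flip i u)) ` ({..<d} \<times> {..<d}))"
    by (rule card_mono[rotated]) simp
  also have "\<dots> \<le> card ({..<d} \<times> {..<d})" by (rule card_image_le) simp
  finally show ?thesis by simp
qed

lemma E_B: "measure_pmf.expectation (Qdp d p) (\<lambda>G. Bsum d G V) \<le> real (card V) * (real d)^2 * (cc p 1 ^ d)^2"
proof -
  have fin: "finite V" by (rule side_finite[OF sd])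
  have "measure_pmf.expectation (Qdp d p) (\<lambda>G. Bsum d G V)
     = (\<Sum>u\<in>V. \<Sum>v\<in>T2 d V u. measure_pmf.expectation (Qdp d p) (\<lambda>G. xv d G u * xv d G v))"
    unfolding Bsum_def by simp
  also have "\<dots> = (\<Sum>u\<in>V. \<Sum>v\<in>T2 d V u. (cc p 1 ^ d)^2)"
  proof (intro sum.cong refl)
    fix u v assume u: "u \<in> V" and v: "v \<in> T2 d V u"
    then have "v \<in> V" "u \<noteq> v" unfolding T2_def two_nbrs_def by auto
    then show "measure_pmf.expectation (Qdp d p) (\<lambda>G. xv d G u * xv d G v) = (cc p 1 ^ d)^2"
      using E_pair[OF u, of v 1] by simp
  qed
  also have "\<dots> = (\<Sum>u\<in>V. real (card (T2 d V u)) * (cc p 1 ^ d)^2)" by simp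
  also have "\<dots> \<le> (\<Sum>u\<in>V. (real d)^2 * (cc p 1 ^ d)^2)"
  proof (rule sum_mono)
    fix u assume "u \<in> V"
    then have "u \<in> cube d" using side_sub[OF sd] by blast
    then have "real (card (T2 d V u)) \<le> (real d)^2"
      using card_T2 by (metis of_nat_le_iff of_nat_mult power2_eq_square)
    then show "real (card (T2 d V u)) * (cc p 1 ^ d)^2 \<le> (real d)^2 * (cc p 1 ^ d)^2"
      by (rule mult_right_mono) simp
  qed
  also have "\<dots> = real (card V) * (real d)^2 * (cc p 1 ^ d)^2" by simp
  finally show ?thesis .
qed

lemma E_B_nonneg: "0 \<le> Bsum d G V"
  unfolding Bsum_def by (intro sum_nonneg mult_nonneg_nonneg xv_nonneg)

end

lemma sq_geom:
  fixes \<theta> :: real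
  assumes "0 \<le> \<theta>" "\<theta> < 1"
  shows "(\<lambda>d. (real d)^2 * \<theta> ^ d) \<longlonglongrightarrow> 0"
proof -
  have "norm (sqrt \<theta>) < 1" using assms by (simp add: real_sqrt_lt_1_iff)
  then have "(\<lambda>n. real n * sqrt \<theta> ^ n) \<longlonglongrightarrow> 0" using powser_times_n_limit_0 by blast
  then have "(\<lambda>n. (real n * sqrt \<theta> ^ n)^2) \<longlonglongrightarrow> 0^2" by (intro tendsto_power)
  moreover have "(real n * sqrt \<theta> ^ n)^2 = (real n)^2 * \<theta> ^ n" for n
  proof -
    have "(sqrt \<theta> ^ n)^2 = (sqrt \<theta> ^ 2) ^ n" by (metis power_mult mult.commute)
    also have "\<dots> = \<theta> ^ n" using assms(1) by simp
    finally show ?thesis by (simp add: power_mult_distrib)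
  qed
  ultimately show ?thesis by simp
qed

lemma tail_asymp: "(\<lambda>d::nat. exp (-(2^d/(real d)^2)/2) * sqrt(2^(d+1))) \<longlonglongrightarrow> 0"
  by real_asymp

lemma half_pow: "d \<ge> 1 \<Longrightarrow> real (2 ^ (d - 1)) * c ^ d = (1/2) * (2 * c) ^ d"
  by (cases d) (simp_all add: power_mult_distrib)

lemma prob_cover4:
  fixes M :: "'a pmf"
  assumes "S \<subseteq> A \<union> B \<union> C \<union> D"
  shows "measure_pmf.prob M S \<le> measure_pmf.prob M A + measure_pmf.prob M B + measure_pmf.prob M C + measure_pmf.prob M D"
proof -
  have "measure_pmf.prob M S \<le> measure_pmf.prob M (A \<union> B \<union> C \<union> D)"
    by (rule measure_pmf.finite_measure_mono[OF assms]) simp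
  also have "\<dots> \<le> measure_pmf.prob M (A \<union> B \<union> C) + measure_pmf.prob M D"
    by (rule measure_Un_le) auto
  also have "measure_pmf.prob M (A \<union> B \<union> C) \<le> measure_pmf.prob M (A \<union> B) + measure_pmf.prob M C"
    by (rule measure_Un_le) auto
  also have "measure_pmf.prob M (A \<union> B) \<le> measure_pmf.prob M A + measure_pmf.prob M B"
    by (rule measure_Un_le) auto
  finally show ?thesis by simp
qed

lemma prob_cover5:
  fixes M :: "'a pmf"
  assumes "S \<subseteq> A \<union> B \<union> C \<union> D \<union> E"
  shows "measure_pmf.prob M S \<le> measure_pmf.prob M A + measure_pmf.prob M B + measure_pmf.prob M C + measure_pmf.prob M D + measure_pmf.prob M E"
proof -
  have "measure_pmf.prob M S \<le> measure_pmf.prob M (A \<union> B \<union> C \<union> D \<union> E)"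
    by (rule measure_pmf.finite_measure_mono[OF assms]) simp
  also have "\<dots> \<le> measure_pmf.prob M (A \<union> B \<union> C \<union> D) + measure_pmf.prob M E"
    by (rule measure_Un_le) auto
  also have "measure_pmf.prob M (A \<union> B \<union> C \<union> D) \<le> measure_pmf.prob M A + measure_pmf.prob M B + measure_pmf.prob M C + measure_pmf.prob M D"
    by (rule prob_cover4) simp
  finally show ?thesis by simp
qed

lemma tendsto_zero_eta:
  fixes f :: "nat \<Rightarrow> real"
  assumes f0: "\<And>d. 0 \<le> f d"
    and H: "\<And>\<eta>. \<eta> > 0 \<Longrightarrow> \<exists>g. g \<longlonglongrightarrow> 0 \<and> (\<forall>\<^sub>F d in sequentially. f d \<le> \<eta> + g d)"
  shows "f \<longlonglongrightarrow> 0"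
proof (rule order_tendstoI)
  fix a :: real assume "a < 0" then show "\<forall>\<^sub>F d in sequentially. a < f d" using f0
    by (intro always_eventually) (auto intro: less_le_trans)
next
  fix a :: real assume a: "0 < a"
  obtain g where g: "g \<longlonglongrightarrow> 0" and ev: "\<forall>\<^sub>F d in sequentially. f d \<le> a/2 + g d"
    using H[of "a/2"] a by auto
  have "\<forall>\<^sub>F d in sequentially. g d < a/2" using order_tendstoD(2)[OF g, of "a/2"] a by linarith
  with ev show "\<forall>\<^sub>F d in sequentially. f d < a" by eventually_elim simp
qed

lemma tendsto_le_zero:
  fixes f g :: "nat \<Rightarrow> real"
  assumes "\<And>d. 0 \<le> f d" "\<forall>\<^sub>F d in sequentially. f d \<le> g d" "g \<longlonglongrightarrow> 0"
  shows "f \<longlonglongrightarrow> 0"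
  by (rule tendsto_sandwich[of "\<lambda>_. 0" f sequentially g 0]) (use assms in auto)

definition QQ :: "nat \<Rightarrow> (nat set set \<Rightarrow> bool) \<Rightarrow> nat set set \<Rightarrow> real" where
  "QQ d G V = (\<Sum>v\<in>V. xv d G v ^ 2)"
definition CC :: "nat \<Rightarrow> (nat set set \<Rightarrow> bool) \<Rightarrow> nat set set \<Rightarrow> real" where
  "CC d G V = (\<Sum>v\<in>V. xv d G v ^ 3)"
definition MM :: "nat \<Rightarrow> real" where
  "MM d = 2 ^ d / (real d)\<^sup>2"

lemma sigma_sq: "0 \<le> p \<Longrightarrow> p \<le> 1 \<Longrightarrow> (sigma_p p d)^2 = (1/2) * ((4 - 3 * p) / 2) ^ d"
  unfolding sigma_p_def by (subst real_sqrt_pow2) auto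

lemma sigma_pos: "p \<le> 1 \<Longrightarrow> 0 < sigma_p p d"
  unfolding sigma_p_def by simp

context
  fixes d :: nat and p :: real and V :: "nat set set"
  assumes sd: "is_side d V" and p0: "0 \<le> p" and p1: "p \<le> 1" and d1: "d \<ge> 1"
begin

lemma cardV: "real (card V) = real (2 ^ (d - 1))"
  using card_side[OF sd d1] by simp

lemma eq_mu: "real (card V) * cc p 1 ^ d = mu_p p d"
  unfolding cardV half_pow[OF d1] mu_p_def cc_def by (simp add: algebra_simps)

lemma eq_sig: "real (card V) * cc p 2 ^ d = (sigma_p p d)^2"
proof -
  have "2 * cc p 2 = (4 - 3 * p) / 2" unfolding cc_def by (simp add: field_simps power2_eq_square)
  then have "(1/2) * (2 * cc p 2) ^ d = (1/2) * ((4 - 3 * p) / 2) ^ d" by (simp only:)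
  then show ?thesis unfolding cardV half_pow[OF d1] sigma_sq[OF p0 p1] .
qed

lemma eq_B: "real (card V) * (real d)^2 * (cc p 1 ^ d)^2 = (real d)^2 / 2 * ((2 - p)^2 / 2) ^ d"
proof -
  have "real (card V) * (real d)^2 * (cc p 1 ^ d)^2 = (real d)^2 * (real (card V) * (cc p 1 ^ 2) ^ d)"
  proof -
    have "(cc p 1 ^ d)^2 = (cc p 1 ^ 2) ^ d" by (metis power_mult mult.commute)
    then show ?thesis by simp
  qed
  also have "real (card V) * (cc p 1 ^ 2) ^ d = (1/2) * (2 * cc p 1 ^ 2) ^ d"
    unfolding cardV by (rule half_pow[OF d1])
  also have "2 * cc p 1 ^ 2 = (2 - p)^2 / 2" unfolding cc_def by (simp add: power2_eq_square algebra_simps)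
  finally show ?thesis by simp
qed

lemma eq_k: "real (card V) * cc p k ^ d = (1/2) * (2 * cc p k) ^ d"
  unfolding cardV by (rule half_pow[OF d1])

abbreviation "PR A \<equiv> measure_pmf.prob (Qdp d p) A"
abbreviation "EXP X \<equiv> measure_pmf.expectation (Qdp d p) X"

lemma pA1: assumes K: "0 < K"
  shows "PR {G. K < Phi d G V - mu_p p d} \<le> (sigma_p p d)^2 / K^2"
proof -
  have "PR {G. K < Phi d G V - mu_p p d} \<le> PR {G. K^2 < (Phi d G V - mu_p p d)^2}"
  proof (rule measure_pmf.finite_measure_mono)
    show "{G. K < Phi d G V - mu_p p d} \<subseteq> {G. K^2 < (Phi d G V - mu_p p d)^2}"
      using K by (auto intro: power_strict_mono)
  qed simp
  also have "\<dots> \<le> EXP (\<lambda>G. (Phi d G V - mu_p p d)^2) / K^2"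
    by (rule markov[OF finite_set_Qdp]) (use K in auto)
  also have "\<dots> \<le> (sigma_p p d)^2 / K^2"
    using Var_Phi[OF sd p0 p1] unfolding eq_mu eq_sig by (simp add: divide_right_mono)
  finally show ?thesis .
qed

lemma pQs: assumes \<delta>: "0 < \<delta>"
  shows "PR {G. \<delta> < QQ d G V / sigma_p p d} \<le> sigma_p p d / \<delta>"
proof -
  have s: "0 < sigma_p p d" by (rule sigma_pos[OF p1])
  have "PR {G. \<delta> < QQ d G V / sigma_p p d} \<le> EXP (\<lambda>G. QQ d G V / sigma_p p d) / \<delta>"
    by (rule markov[OF finite_set_Qdp]) (use \<delta> s in \<open>auto simp: QQ_def intro!: sum_nonneg divide_nonneg_pos\<close>)
  also have "EXP (\<lambda>G. QQ d G V / sigma_p p d) = (sigma_p p d)^2 / sigma_p p d"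
    unfolding QQ_def using E_sum_pow[OF sd p0 p1, of 2] eq_sig by simp
  also have "\<dots> = sigma_p p d" using s by (simp add: power2_eq_square)
  finally show ?thesis .
qed

lemma pB: assumes \<delta>: "0 < \<delta>"
  shows "PR {G. \<delta> < Bsum d G V} \<le> (real d)^2 / 2 * ((2 - p)^2 / 2) ^ d / \<delta>"
proof -
  have "PR {G. \<delta> < Bsum d G V} \<le> EXP (\<lambda>G. Bsum d G V) / \<delta>"
    by (rule markov[OF finite_set_Qdp]) (use \<delta> E_B_nonneg[OF sd p0 p1] in auto)
  also have "\<dots> \<le> (real d)^2 / 2 * ((2 - p)^2 / 2) ^ d / \<delta>"
  proof -
    have "EXP (\<lambda>G. Bsum d G V) \<le> (real d)^2 / 2 * ((2 - p)^2 / 2) ^ d"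
      using E_B[OF sd p0 p1] unfolding eq_B .
    then show ?thesis using divide_right_mono \<delta> less_imp_le by blast
  qed
  finally show ?thesis .
qed

lemma pPhi: assumes \<delta>: "0 < \<delta>"
  shows "PR {G. \<delta> < Phi d G V} \<le> mu_p p d / \<delta>"
proof -
  have "PR {G. \<delta> < Phi d G V} \<le> EXP (\<lambda>G. Phi d G V) / \<delta>"
    by (rule markov[OF finite_set_Qdp]) (use \<delta> in \<open>auto simp: Phi_eq intro!: sum_nonneg xv_nonneg\<close>)
  also have "\<dots> = mu_p p d / \<delta>" using E_Phi[OF sd p0 p1] eq_mu by simp
  finally show ?thesis .
qed

lemma pC: assumes \<delta>: "0 < \<delta>"
  shows "PR {G. \<delta> < CC d G V} \<le> (1/2) * (2 * cc p 3) ^ d / \<delta>"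
proof -
  have "PR {G. \<delta> < CC d G V} \<le> EXP (\<lambda>G. CC d G V) / \<delta>"
    by (rule markov[OF finite_set_Qdp]) (use \<delta> in \<open>auto simp: CC_def intro!: sum_nonneg xv_nonneg\<close>)
  also have "EXP (\<lambda>G. CC d G V) = (1/2) * (2 * cc p 3) ^ d"
    unfolding CC_def E_sum_pow[OF sd p0 p1] eq_k ..
  finally show ?thesis .
qed

lemma pQ: assumes \<delta>: "0 < \<delta>"
  shows "PR {G. \<delta> < \<bar>QQ d G V - (sigma_p p d)^2\<bar>} \<le> (1/2) * (2 * cc p 4) ^ d / \<delta>^2"
proof -
  have "PR {G. \<delta> < \<bar>QQ d G V - (sigma_p p d)^2\<bar>} \<le> PR {G. \<delta>^2 < (QQ d G V - (sigma_p p d)^2)^2}"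
  proof (rule measure_pmf.finite_measure_mono)
    show "{G. \<delta> < \<bar>QQ d G V - (sigma_p p d)^2\<bar>} \<subseteq> {G. \<delta>^2 < (QQ d G V - (sigma_p p d)^2)^2}"
    proof
      fix G assume "G \<in> {G. \<delta> < \<bar>QQ d G V - (sigma_p p d)^2\<bar>}"
      then have "\<delta> < \<bar>QQ d G V - (sigma_p p d)^2\<bar>" by simp
      then have "\<delta>^2 < \<bar>QQ d G V - (sigma_p p d)^2\<bar>^2"
        using \<delta> by (intro power_strict_mono) auto
      then show "G \<in> {G. \<delta>^2 < (QQ d G V - (sigma_p p d)^2)^2}" by simp
    qed
  qed simp
  also have "\<dots> \<le> EXP (\<lambda>G. (QQ d G V - (sigma_p p d)^2)^2) / \<delta>^2"
    by (rule markov[OF finite_set_Qdp]) (use \<delta> in auto)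
  also have "\<dots> \<le> (1/2) * (2 * cc p 4) ^ d / \<delta>^2"
  proof -
    have "EXP (\<lambda>G. (QQ d G V - (sigma_p p d)^2)^2) \<le> (1/2) * (2 * cc p 4) ^ d"
      using Var_Q[OF sd p0 p1] unfolding QQ_def eq_sig[symmetric] eq_k .
    then show ?thesis using divide_right_mono \<delta> by (metis zero_le_power2)
  qed
  finally show ?thesis .
qed

end

lemma poly_ineq: "2/3 < (p::real) \<Longrightarrow> p < 1 \<Longrightarrow> ((2-p)^2/2)^2 < (4-3*p)/2"
proof -
  assume a: "2/3 < p" "p < 1"
  define t where "t = p - 2/3"
  have t: "0 < t" "t < 1/3" using a by (auto simp: t_def)
  have p: "p = 2/3 + t" by (simp add: t_def)
  have h2: "t^2 \<le> t/3" using t by (simp add: power2_eq_square mult_right_mono)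
  have h4: "t^4 \<le> t^3" using t by (simp add: power_decreasing)
  have h3: "0 \<le> t^3" using t by simp
  have e: "((2-p)^2/2)^2 = (256/81 - 256/27*t + 32/3*t^2 - 16/3*t^3 + t^4) / 4"
    unfolding p by (simp add: power2_eq_square power3_eq_cube power4_eq_xxxx algebra_simps divide_simps)
  show ?thesis unfolding e unfolding p by (simp add: field_simps) (use h2 h3 h4 t in linarith)
qed

lemma pt_bounds:
  assumes sd: "is_side d V" and hP: "Phi d G V \<le> MM d / 4"
  shows "GoodSum d G V / exp (Phi d G V) \<le> 1"
    "GoodSum d G V / exp (Phi d G V) \<le> exp (- QQ d G V / 2 + CC d G V / 3)"
    "exp (- QQ d G V / 2) - Bsum d G V - exp (- MM d / 2) \<le> GoodSum d G V / exp (Phi d G V)"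
proof -
  note db = det_bounds[OF sd, of G]
  show "GoodSum d G V / exp (Phi d G V) \<le> 1" using db(1) by simp
  show "GoodSum d G V / exp (Phi d G V) \<le> exp (- QQ d G V / 2 + CC d G V / 3)"
    unfolding QQ_def CC_def by (rule db(2))
  have P0: "0 \<le> Phi d G V" unfolding Phi_eq by (intro sum_nonneg xv_nonneg)
  have "(exp 1 - 1) * Phi d G V \<le> 2 * Phi d G V" using exp_le P0 by (intro mult_right_mono) auto
  then have "- MM d + (exp 1 - 1) * Phi d G V \<le> - MM d / 2" using hP by linarith
  then have e1: "exp (- MM d + (exp 1 - 1) * Phi d G V) \<le> exp (- MM d / 2)" by simp
  have low: "exp (- QQ d G V / 2) - Bsum d G V - exp (- MM d + (exp 1 - 1) * Phi d G V) \<le> GoodSum d G V / exp (Phi d G V)"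
    unfolding QQ_def MM_def by (rule db(3))
  show "exp (- QQ d G V / 2) - Bsum d G V - exp (- MM d / 2) \<le> GoodSum d G V / exp (Phi d G V)"
    using low e1 by linarith
qed

lemma pt_gt:
  assumes sd: "is_side d V" and s: "0 < s" and \<delta>: "0 < \<delta>"
    and hQ: "QQ d G V \<le> \<delta> * s" and hB: "Bsum d G V \<le> \<delta> * s" and hP: "Phi d G V \<le> MM d / 4"
    and hT: "exp (- MM d / 2) \<le> \<delta> * s"
  shows "\<bar>GoodSum d G V / exp (Phi d G V) - 1\<bar> \<le> 5/2 * \<delta> * s"
proof -
  note pb = pt_bounds[OF sd hP]
  have e2: "1 - QQ d G V / 2 \<le> exp (- QQ d G V / 2)" using exp_ge_add_one_self[of "- QQ d G V / 2"] by simp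
  have "1 - GoodSum d G V / exp (Phi d G V) \<le> 5/2 * \<delta> * s"
    using pb(3) e2 hQ hB hT by linarith
  then show ?thesis using pb(1) by linarith
qed

lemma sigma_ge: "p \<le> 1 \<Longrightarrow> sqrt ((1/2) ^ (d+1)) \<le> sigma_p p d"
proof -
  assume p1: "p \<le> 1"
  have "(1/2::real) ^ d \<le> ((4 - 3 * p) / 2) ^ d" using p1 by (intro power_mono) auto
  then show ?thesis unfolding sigma_p_def by simp
qed

lemma tail_event:
  assumes p1: "p \<le> 1" and \<delta>: "0 < \<delta>"
  shows "\<forall>\<^sub>F d in sequentially. exp (- MM d / 2) \<le> \<delta> * sigma_p p d"
proof -
  have "\<forall>\<^sub>F d in sequentially. exp (-(2^d/(real d)^2)/2) * sqrt(2^(d+1)) < \<delta>"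
    using order_tendstoD(2)[OF tail_asymp \<delta>] .
  then show ?thesis
  proof eventually_elim
    case (elim d)
    have one: "sqrt (2 ^ (d+1)) * sqrt ((1/2) ^ (d+1)) = (1::real)"
      by (simp add: real_sqrt_mult[symmetric] power_mult_distrib[symmetric])
    have "exp (- MM d / 2) = exp (-(2^d/(real d)^2)/2) * sqrt(2^(d+1)) * sqrt ((1/2) ^ (d+1))"
      unfolding MM_def using one by (simp add: mult.assoc)
    also have "\<dots> \<le> \<delta> * sqrt ((1/2) ^ (d+1))"
      using elim by (intro mult_right_mono) auto
    also have "\<dots> \<le> \<delta> * sigma_p p d" using sigma_ge[OF p1] \<delta> by (intro mult_left_mono) auto
    finally show ?case .
  qed
qed

lemma LP:
  assumes p0: "0 < p" and p1: "p \<le> 1"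
  shows "(\<lambda>d. mu_p p d / (MM d / 4)) \<longlonglongrightarrow> 0"
proof (rule tendsto_le_zero)
  show "0 \<le> mu_p p d / (MM d / 4)" for d unfolding mu_p_def MM_def using p1 by simp
  show "(\<lambda>d. 2 * ((real d)^2 * ((2 - p)/2) ^ d)) \<longlonglongrightarrow> 0"
    using tendsto_mult_right_zero[OF sq_geom[of "(2-p)/2"], of 2] p0 p1 by simp
  show "\<forall>\<^sub>F d in sequentially. mu_p p d / (MM d / 4) \<le> 2 * ((real d)^2 * ((2 - p)/2) ^ d)"
    using eventually_ge_at_top[of 1]
  proof eventually_elim
    case (elim d)
    then have "real d > 0" by simp
    then show ?case unfolding mu_p_def MM_def by (simp add: power_divide field_simps)
  qed
qed

lemma case_gt:
  fixes p :: real and sf :: "nat \<Rightarrow> nat set set"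
  assumes pg: "2/3 < p" and pl: "p < 1" and sd: "\<And>d. is_side d (sf d)"
  shows "\<forall>\<epsilon>>0. (\<lambda>d. measure_pmf.prob (Qdp d p)
         {G. \<epsilon> < \<bar>(GoodSum d G (sf d) - zeta_p p * exp (Phi d G (sf d)))
                    / (sigma_p p d * exp (mu_p p d))\<bar>}) \<longlonglongrightarrow> 0"
    and "\<forall>\<epsilon>>0. (\<lambda>d. measure_pmf.prob (Qdp d p)
         {G. \<epsilon> < \<bar>GoodSum d G (sf d) / (zeta_p p * exp (Phi d G (sf d))) - 1\<bar>}) \<longlonglongrightarrow> 0"
proof -
  have p0: "0 \<le> p" and p1: "p \<le> 1" and pp: "0 < p" using pg pl by auto
  have z: "zeta_p p = 1" using pg by (simp add: zeta_p_def)
  define r where "r = (4 - 3*p)/2"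
  define \<rho> where "\<rho> = (2-p)^2/2"
  have r: "1/2 < r" "r < 1" using pg pl by (auto simp: r_def)
  have sig: "sigma_p p d = sqrt (1/2) * sqrt r ^ d" for d
    unfolding sigma_p_def r_def by (simp only: real_sqrt_mult real_sqrt_power)
  have spos: "0 < sigma_p p d" for d using sigma_pos p1 by simp
  have sle1: "sigma_p p d \<le> 1" for d
  proof -
    have "sqrt r ^ d \<le> 1" using r by (intro power_le_one) auto
    moreover have "sqrt (1/2::real) \<le> 1" by simp
    moreover have "0 \<le> sqrt r ^ d" using r by simp
    ultimately show ?thesis unfolding sig by (intro mult_le_one) auto
  qed
  have Ls: "(\<lambda>d. sigma_p p d) \<longlonglongrightarrow> 0"
  proof -
    have "(\<lambda>d. sqrt r ^ d) \<longlonglongrightarrow> 0" using r by (intro LIMSEQ_power_zero) auto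
    then show ?thesis unfolding sig by (rule tendsto_mult_right_zero)
  qed
  have Ls2: "(\<lambda>d. (sigma_p p d)^2) \<longlonglongrightarrow> 0" using tendsto_power[OF Ls, of 2] by simp
  define \<theta> where "\<theta> = \<rho> / sqrt r"
  have th: "0 \<le> \<theta>" "\<theta> < 1"
  proof -
    have "\<rho>^2 < r" unfolding \<rho>_def r_def by (rule poly_ineq[OF pg pl])
    then have "\<rho> < sqrt r" by (rule real_less_rsqrt)
    moreover have "0 < sqrt r" using r by simp
    ultimately show "0 \<le> \<theta>" "\<theta> < 1" unfolding \<theta>_def \<rho>_def by auto
  qed
  have LB: "(\<lambda>d. (real d)^2 / 2 * \<rho> ^ d / sigma_p p d) \<longlonglongrightarrow> 0"
  proof -
    have eq: "(real d)^2 / 2 * \<rho> ^ d / sigma_p p d = (1 / (2 * sqrt (1/2))) * ((real d)^2 * \<theta> ^ d)" for d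
    proof -
      have "0 < sqrt r" using r by simp
      then show ?thesis unfolding sig \<theta>_def by (simp add: power_divide field_simps)
    qed
    show ?thesis unfolding eq by (rule tendsto_mult_right_zero[OF sq_geom[OF th]])
  qed
  have LPm: "(\<lambda>d. mu_p p d / (MM d / 4)) \<longlonglongrightarrow> 0" by (rule LP[OF pp p1])
  note defs = QQ_def CC_def
  have R_eq: "\<bar>(GoodSum d G (sf d) - exp (Phi d G (sf d))) / (sigma_p p d * exp (mu_p p d))\<bar>
      = \<bar>GoodSum d G (sf d) / exp (Phi d G (sf d)) - 1\<bar> * exp (Phi d G (sf d) - mu_p p d) / sigma_p p d" for d G
  proof -
    have "(GoodSum d G (sf d) - exp (Phi d G (sf d))) / (sigma_p p d * exp (mu_p p d))
       = (GoodSum d G (sf d) / exp (Phi d G (sf d)) - 1) * (exp (Phi d G (sf d)) / exp (mu_p p d)) / sigma_p p d"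
      using spos[of d] by (simp add: field_simps)
    then show ?thesis using spos[of d] by (simp add: abs_mult exp_diff)
  qed
  show "\<forall>\<epsilon>>0. (\<lambda>d. measure_pmf.prob (Qdp d p)
         {G. \<epsilon> < \<bar>(GoodSum d G (sf d) - zeta_p p * exp (Phi d G (sf d)))
                    / (sigma_p p d * exp (mu_p p d))\<bar>}) \<longlonglongrightarrow> 0"
  proof (intro allI impI)
    fix \<epsilon> :: real assume \<epsilon>: "0 < \<epsilon>"
    define \<delta> where "\<delta> = \<epsilon> / (3 * exp 1)"
    have \<delta>: "0 < \<delta>" using \<epsilon> by (simp add: \<delta>_def)
    define g where "g d = (sigma_p p d)^2 / 1^2 + sigma_p p d / \<delta> + (real d)^2 / 2 * \<rho> ^ d / (\<delta> * sigma_p p d) + mu_p p d / (MM d / 4)" for d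
    show "(\<lambda>d. measure_pmf.prob (Qdp d p)
         {G. \<epsilon> < \<bar>(GoodSum d G (sf d) - zeta_p p * exp (Phi d G (sf d)))
                    / (sigma_p p d * exp (mu_p p d))\<bar>}) \<longlonglongrightarrow> 0"
    proof (rule tendsto_le_zero[where g = g])
      show "g \<longlonglongrightarrow> 0" unfolding g_def
      proof (intro tendsto_add_zero)
        show "(\<lambda>d. (sigma_p p d)^2 / 1^2) \<longlonglongrightarrow> 0" using Ls2 by simp
        show "(\<lambda>d. sigma_p p d / \<delta>) \<longlonglongrightarrow> 0" using tendsto_divide_zero[OF Ls, of \<delta>] by simp
        show "(\<lambda>d. (real d)^2 / 2 * \<rho> ^ d / (\<delta> * sigma_p p d)) \<longlonglongrightarrow> 0"
          using tendsto_divide_zero[OF LB, of \<delta>] by (simp add: field_simps)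
      qed (rule LPm)
      show "\<forall>\<^sub>F d in sequentially. measure_pmf.prob (Qdp d p)
         {G. \<epsilon> < \<bar>(GoodSum d G (sf d) - zeta_p p * exp (Phi d G (sf d)))
                    / (sigma_p p d * exp (mu_p p d))\<bar>} \<le> g d"
        using eventually_ge_at_top[of 1] tail_event[OF p1 \<delta>]
      proof eventually_elim
        case (elim d)
        note d1 = elim(1) and hT = elim(2)
        define A1 where "A1 = {G. 1 < Phi d G (sf d) - mu_p p d}"
        define A2 where "A2 = {G. \<delta> < QQ d G (sf d) / sigma_p p d}"
        define A3 where "A3 = {G. \<delta> * sigma_p p d < Bsum d G (sf d)}"
        define A4 where "A4 = {G. MM d / 4 < Phi d G (sf d)}"
        have sub: "{G. \<epsilon> < \<bar>(GoodSum d G (sf d) - zeta_p p * exp (Phi d G (sf d)))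
                    / (sigma_p p d * exp (mu_p p d))\<bar>} \<subseteq> A1 \<union> A2 \<union> A3 \<union> A4"
        proof (rule subsetI, rule ccontr)
          fix G assume G: "G \<in> {G. \<epsilon> < \<bar>(GoodSum d G (sf d) - zeta_p p * exp (Phi d G (sf d)))
                    / (sigma_p p d * exp (mu_p p d))\<bar>}" and nG: "G \<notin> A1 \<union> A2 \<union> A3 \<union> A4"
          have h1: "Phi d G (sf d) - mu_p p d \<le> 1" using nG by (auto simp: A1_def)
          have "QQ d G (sf d) / sigma_p p d \<le> \<delta>" using nG unfolding A2_def by auto
          then have h2: "QQ d G (sf d) \<le> \<delta> * sigma_p p d" using spos[of d] by (simp add: pos_divide_le_eq mult.commute)
          have h3: "Bsum d G (sf d) \<le> \<delta> * sigma_p p d" using nG by (auto simp: A3_def)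
          have h4: "Phi d G (sf d) \<le> MM d / 4" using nG by (auto simp: A4_def)
          have b: "\<bar>GoodSum d G (sf d) / exp (Phi d G (sf d)) - 1\<bar> \<le> 5/2 * \<delta> * sigma_p p d"
            by (rule pt_gt[OF sd spos \<delta> h2 h3 h4 hT])
          have ee: "exp (Phi d G (sf d) - mu_p p d) \<le> exp 1" using h1 by simp
          have "\<bar>GoodSum d G (sf d) / exp (Phi d G (sf d)) - 1\<bar> * exp (Phi d G (sf d) - mu_p p d)
              \<le> (5/2 * \<delta> * sigma_p p d) * exp 1"
            by (rule mult_mono[OF b ee]) (use \<delta> spos[of d] in auto)
          then have "\<bar>GoodSum d G (sf d) / exp (Phi d G (sf d)) - 1\<bar> * exp (Phi d G (sf d) - mu_p p d) / sigma_p p d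
              \<le> 5/2 * \<delta> * exp 1"
            using spos[of d] by (simp add: pos_divide_le_eq mult.commute mult.left_commute)
          also have "\<dots> < \<epsilon>" using \<epsilon> by (simp add: \<delta>_def)
          finally show False using G R_eq[of d G] z by simp
        qed
        have "measure_pmf.prob (Qdp d p) {G. \<epsilon> < \<bar>(GoodSum d G (sf d) - zeta_p p * exp (Phi d G (sf d)))
                    / (sigma_p p d * exp (mu_p p d))\<bar>}
          \<le> measure_pmf.prob (Qdp d p) A1 + measure_pmf.prob (Qdp d p) A2 + measure_pmf.prob (Qdp d p) A3 + measure_pmf.prob (Qdp d p) A4"
          by (rule prob_cover4[OF sub])
        also have "\<dots> \<le> g d" unfolding g_def
        proof (intro add_mono)
          show "measure_pmf.prob (Qdp d p) A1 \<le> (sigma_p p d)^2 / 1^2"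
            unfolding A1_def by (rule pA1[OF sd p0 p1 d1]) simp
          show "measure_pmf.prob (Qdp d p) A2 \<le> sigma_p p d / \<delta>"
            unfolding A2_def by (rule pQs[OF sd p0 p1 d1 \<delta>])
          show "measure_pmf.prob (Qdp d p) A3 \<le> (real d)^2 / 2 * \<rho> ^ d / (\<delta> * sigma_p p d)"
            unfolding A3_def \<rho>_def by (rule pB[OF sd p0 p1 d1]) (use \<delta> spos[of d] in simp)
          have "0 < MM d / 4" using d1 by (simp add: MM_def)
          then show "measure_pmf.prob (Qdp d p) A4 \<le> mu_p p d / (MM d / 4)"
            unfolding A4_def by (rule pPhi[OF sd p0 p1 d1])
        qed
        finally show ?case .
      qed
    qed simp
  qed
  show "\<forall>\<epsilon>>0. (\<lambda>d. measure_pmf.prob (Qdp d p)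
         {G. \<epsilon> < \<bar>GoodSum d G (sf d) / (zeta_p p * exp (Phi d G (sf d))) - 1\<bar>}) \<longlonglongrightarrow> 0"
  proof (intro allI impI)
    fix \<epsilon> :: real assume \<epsilon>: "0 < \<epsilon>"
    define \<delta> where "\<delta> = \<epsilon> / 3"
    have \<delta>: "0 < \<delta>" using \<epsilon> by (simp add: \<delta>_def)
    define g where "g d = sigma_p p d / \<delta> + (real d)^2 / 2 * \<rho> ^ d / (\<delta> * sigma_p p d) + mu_p p d / (MM d / 4) + 0" for d
    show "(\<lambda>d. measure_pmf.prob (Qdp d p)
         {G. \<epsilon> < \<bar>GoodSum d G (sf d) / (zeta_p p * exp (Phi d G (sf d))) - 1\<bar>}) \<longlonglongrightarrow> 0"
    proof (rule tendsto_le_zero[where g = g])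
      show "g \<longlonglongrightarrow> 0" unfolding g_def
      proof (intro tendsto_add_zero)
        show "(\<lambda>d. sigma_p p d / \<delta>) \<longlonglongrightarrow> 0" using tendsto_divide_zero[OF Ls, of \<delta>] by simp
        show "(\<lambda>d. (real d)^2 / 2 * \<rho> ^ d / (\<delta> * sigma_p p d)) \<longlonglongrightarrow> 0"
          using tendsto_divide_zero[OF LB, of \<delta>] by (simp add: field_simps)
      qed (rule LPm, simp)
      show "\<forall>\<^sub>F d in sequentially. measure_pmf.prob (Qdp d p)
         {G. \<epsilon> < \<bar>GoodSum d G (sf d) / (zeta_p p * exp (Phi d G (sf d))) - 1\<bar>} \<le> g d"
        using eventually_ge_at_top[of 1] tail_event[OF p1 \<delta>]
      proof eventually_elim
        case (elim d)
        note d1 = elim(1) and hT = elim(2)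
        define A2 where "A2 = {G. \<delta> < QQ d G (sf d) / sigma_p p d}"
        define A3 where "A3 = {G. \<delta> * sigma_p p d < Bsum d G (sf d)}"
        define A4 where "A4 = {G. MM d / 4 < Phi d G (sf d)}"
        have sub: "{G. \<epsilon> < \<bar>GoodSum d G (sf d) / (zeta_p p * exp (Phi d G (sf d))) - 1\<bar>} \<subseteq> A2 \<union> A3 \<union> A4 \<union> {}"
        proof (rule subsetI, rule ccontr)
          fix G assume G: "G \<in> {G. \<epsilon> < \<bar>GoodSum d G (sf d) / (zeta_p p * exp (Phi d G (sf d))) - 1\<bar>}"
            and nG: "G \<notin> A2 \<union> A3 \<union> A4 \<union> {}"
          have "QQ d G (sf d) / sigma_p p d \<le> \<delta>" using nG unfolding A2_def by auto
          then have h2: "QQ d G (sf d) \<le> \<delta> * sigma_p p d" using spos[of d] by (simp add: pos_divide_le_eq mult.commute)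
          have h3: "Bsum d G (sf d) \<le> \<delta> * sigma_p p d" using nG by (auto simp: A3_def)
          have h4: "Phi d G (sf d) \<le> MM d / 4" using nG by (auto simp: A4_def)
          have b: "\<bar>GoodSum d G (sf d) / exp (Phi d G (sf d)) - 1\<bar> \<le> 5/2 * \<delta> * sigma_p p d"
            by (rule pt_gt[OF sd spos \<delta> h2 h3 h4 hT])
          also have "\<dots> \<le> 5/2 * \<delta>" using sle1[of d] \<delta> by simp
          also have "\<dots> < \<epsilon>" using \<epsilon> by (simp add: \<delta>_def)
          finally show False using G z by simp
        qed
        have "measure_pmf.prob (Qdp d p) {G. \<epsilon> < \<bar>GoodSum d G (sf d) / (zeta_p p * exp (Phi d G (sf d))) - 1\<bar>}
          \<le> measure_pmf.prob (Qdp d p) A2 + measure_pmf.prob (Qdp d p) A3 + measure_pmf.prob (Qdp d p) A4 + measure_pmf.prob (Qdp d p) {}"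
          by (rule prob_cover4[OF sub])
        also have "\<dots> \<le> g d" unfolding g_def
        proof (intro add_mono)
          show "measure_pmf.prob (Qdp d p) A2 \<le> sigma_p p d / \<delta>"
            unfolding A2_def by (rule pQs[OF sd p0 p1 d1 \<delta>])
          show "measure_pmf.prob (Qdp d p) A3 \<le> (real d)^2 / 2 * \<rho> ^ d / (\<delta> * sigma_p p d)"
            unfolding A3_def \<rho>_def by (rule pB[OF sd p0 p1 d1]) (use \<delta> spos[of d] in simp)
          have "0 < MM d / 4" using d1 by (simp add: MM_def)
          then show "measure_pmf.prob (Qdp d p) A4 \<le> mu_p p d / (MM d / 4)"
            unfolding A4_def by (rule pPhi[OF sd p0 p1 d1])
        qed simp
        finally show ?case .
      qed
    qed simp
  qed
qed

lemma exp_small: fixes \<delta> :: real assumes "0 \<le> \<delta>" "\<delta> \<le> 1/2" shows "exp \<delta> \<le> 1 + 2 * \<delta>"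
proof -
  have a: "1 - \<delta> \<le> exp (- \<delta>)" using exp_ge_add_one_self[of "- \<delta>"] by simp
  have pos: "0 < 1 - \<delta>" using assms by simp
  have "exp \<delta> = 1 / exp (- \<delta>)" by (simp add: exp_minus field_simps)
  also have "\<dots> \<le> 1 / (1 - \<delta>)" using a pos by (intro divide_left_mono) auto
  also have "\<dots> \<le> 1 + 2 * \<delta>"
  proof -
    have h: "\<delta> * (2 * \<delta>) \<le> \<delta>" using mult_left_mono[of "2*\<delta>" 1 \<delta>] assms by simp
    have "1 \<le> (1 + 2 * \<delta>) * (1 - \<delta>)" using h assms by (simp add: algebra_simps)
    then show ?thesis using pos by (simp add: divide_le_eq)
  qed
  finally show ?thesis .
qed

lemma pt_eq:
  assumes sd: "is_side d V" and \<delta>: "0 < \<delta>" "\<delta> \<le> 1/2"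
    and hQ: "\<bar>QQ d G V - 1/2\<bar> \<le> \<delta>" and hC: "CC d G V \<le> \<delta>" and hB: "Bsum d G V \<le> \<delta>"
    and hP: "Phi d G V \<le> MM d / 4" and hT: "exp (- MM d / 2) \<le> \<delta>"
  shows "\<bar>GoodSum d G V / exp (Phi d G V) - exp (- 1/4)\<bar> \<le> 3 * \<delta>"
proof -
  note pb = pt_bounds[OF sd hP]
  define R where "R = GoodSum d G V / exp (Phi d G V)"
  define z where "z = exp (- 1/4 :: real)"
  have z: "0 < z" "z \<le> 1" unfolding z_def by auto
  have "R \<le> exp (- QQ d G V / 2 + CC d G V / 3)" using pb(2) unfolding R_def .
  also have "\<dots> \<le> exp (- 1/4 + \<delta>)" using hQ hC \<delta> by simp
  also have "\<dots> = z * exp \<delta>" unfolding z_def by (rule exp_add)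
  also have "\<dots> \<le> z * (1 + 2 * \<delta>)" using exp_small[of \<delta>] \<delta> z by (intro mult_left_mono) auto
  finally have "R \<le> z * (1 + 2 * \<delta>)" .
  moreover have "z * (2 * \<delta>) \<le> 2 * \<delta>" using mult_right_mono[of z 1 "2*\<delta>"] z \<delta> by simp
  ultimately have up: "R - z \<le> 2 * \<delta>" by (simp add: algebra_simps)
  have e1: "exp (- 1/4 - \<delta>/2) \<le> exp (- QQ d G V / 2)" using hQ by simp
  have e2: "exp (- 1/4 - \<delta>/2) = z * exp (- (\<delta>/2))" unfolding z_def by (simp add: exp_add[symmetric])
  have e3: "1 - \<delta>/2 \<le> exp (- (\<delta>/2))" using exp_ge_add_one_self[of "- (\<delta>/2)"] by simp
  have "z * (1 - \<delta>/2) \<le> z * exp (- (\<delta>/2))" using z e3 by (intro mult_left_mono) auto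
  then have "z * (1 - \<delta>/2) \<le> exp (- QQ d G V / 2)" using e1 e2 by linarith
  moreover have "z * (\<delta>/2) \<le> \<delta>/2" using mult_right_mono[of z 1 "\<delta>/2"] z \<delta> by simp
  ultimately have low: "z - \<delta>/2 - 2 * \<delta> \<le> R" using pb(3) hB hT unfolding R_def
    by (simp add: algebra_simps)
  show ?thesis using up low unfolding R_def[symmetric] z_def[symmetric] by linarith
qed

lemma sig23: "sigma_p (2/3) d = sqrt (1/2)"
  unfolding sigma_p_def by simp

lemma sqrt_half_ge: "1/2 \<le> sqrt (1/2::real)"
  by (rule real_le_rsqrt) (simp add: power2_eq_square)

lemma R_eq_gen: fixes F z P s m :: real
  assumes "0 < s"
  shows "\<bar>(F - z * exp P) / (s * exp m)\<bar> = \<bar>F / exp P - z\<bar> * exp (P - m) / s"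
proof -
  have "(F - z * exp P) / (s * exp m) = (F / exp P - z) * (exp P / exp m) / s"
    using assms by (simp add: field_simps)
  then show ?thesis using assms by (simp add: abs_mult exp_diff)
qed

lemma case_eq:
  fixes sf :: "nat \<Rightarrow> nat set set"
  assumes sd: "\<And>d. is_side d (sf d)"
  defines "p \<equiv> (2/3 :: real)"
  shows "\<forall>\<epsilon>>0. (\<lambda>d. measure_pmf.prob (Qdp d p)
         {G. \<epsilon> < \<bar>(GoodSum d G (sf d) - zeta_p p * exp (Phi d G (sf d)))
                    / (sigma_p p d * exp (mu_p p d))\<bar>}) \<longlonglongrightarrow> 0"
    and "\<forall>\<epsilon>>0. (\<lambda>d. measure_pmf.prob (Qdp d p)
         {G. \<epsilon> < \<bar>GoodSum d G (sf d) / (zeta_p p * exp (Phi d G (sf d))) - 1\<bar>}) \<longlonglongrightarrow> 0"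
proof -
  have p0: "0 \<le> p" and p1: "p \<le> 1" and pp: "0 < p" by (auto simp: p_def)
  define z where "z = exp (- 1/4 :: real)"
  have zp: "zeta_p p = z" by (simp add: zeta_p_def p_def z_def)
  have z: "0 < z" "z \<le> 1" unfolding z_def by auto
  have sig: "sigma_p p d = sqrt (1/2)" for d unfolding p_def by (rule sig23)
  have sig2: "(sigma_p p d)^2 = 1/2" for d unfolding sig by simp
  have spos: "0 < sigma_p p d" for d unfolding sig by simp
  have sge: "1/2 \<le> sigma_p p d" for d unfolding sig by (rule sqrt_half_ge)
  have sle: "sigma_p p d \<le> 1" for d unfolding sig by simp
  have c3: "2 * cc p 3 = 5/6" and c4: "2 * cc p 4 = 3/4" and rho: "(2 - p)^2 / 2 = 8/9"
    by (simp_all add: cc_def p_def power2_eq_square power_divide)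
  have LPm: "(\<lambda>d. mu_p p d / (MM d / 4)) \<longlonglongrightarrow> 0" by (rule LP[OF pp p1])
  define gg where "gg \<delta> d = (1/2) * (3/4) ^ d / \<delta>^2 + (1/2) * (5/6) ^ d / \<delta> + (real d)^2 / 2 * (8/9) ^ d / \<delta> + mu_p p d / (MM d / 4)" for \<delta> :: real and d
  have gg0: "gg \<delta> \<longlonglongrightarrow> 0" if "0 < \<delta>" for \<delta>
    unfolding gg_def
  proof (intro tendsto_add_zero)
    have "(\<lambda>d. (3/4::real) ^ d) \<longlonglongrightarrow> 0" by (rule LIMSEQ_power_zero) simp
    then show "(\<lambda>d. (1/2) * (3/4) ^ d / \<delta>^2) \<longlonglongrightarrow> 0"
      by (intro tendsto_divide_zero tendsto_mult_right_zero)
    have "(\<lambda>d. (5/6::real) ^ d) \<longlonglongrightarrow> 0" by (rule LIMSEQ_power_zero) simp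
    then show "(\<lambda>d. (1/2) * (5/6) ^ d / \<delta>) \<longlonglongrightarrow> 0"
      by (intro tendsto_divide_zero tendsto_mult_right_zero)
    have "(\<lambda>d. (real d)^2 * (8/9::real) ^ d) \<longlonglongrightarrow> 0" by (rule sq_geom) simp_all
    then show "(\<lambda>d. (real d)^2 / 2 * (8/9) ^ d / \<delta>) \<longlonglongrightarrow> 0"
    proof -
      have "(\<lambda>d. (1/2) * ((real d)^2 * (8/9::real) ^ d) / \<delta>) \<longlonglongrightarrow> 0"
        using \<open>(\<lambda>d. (real d)^2 * (8/9::real) ^ d) \<longlonglongrightarrow> 0\<close> by (intro tendsto_divide_zero tendsto_mult_right_zero)
      then show ?thesis by simp
    qed
  qed (rule LPm)
  have cover: "\<forall>\<^sub>F d in sequentially. \<forall>G. \<not> (\<delta> < \<bar>QQ d G (sf d) - 1/2\<bar>) \<longrightarrow> \<not> (\<delta> < CC d G (sf d))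
        \<longrightarrow> \<not> (\<delta> < Bsum d G (sf d)) \<longrightarrow> \<not> (MM d / 4 < Phi d G (sf d))
        \<longrightarrow> \<bar>GoodSum d G (sf d) / exp (Phi d G (sf d)) - z\<bar> \<le> 3 * \<delta>"
    if \<delta>: "0 < \<delta>" "\<delta> \<le> 1/2" for \<delta>
    using tail_event[OF p1 \<delta>(1)]
  proof eventually_elim
    case (elim d)
    have hT: "exp (- MM d / 2) \<le> \<delta>" using elim sle[of d] \<delta> by (smt (verit) mult_left_le)
    show ?case
    proof (intro allI impI)
      fix G assume "\<not> (\<delta> < \<bar>QQ d G (sf d) - 1/2\<bar>)" "\<not> (\<delta> < CC d G (sf d))"
        "\<not> (\<delta> < Bsum d G (sf d))" "\<not> (MM d / 4 < Phi d G (sf d))"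
      then show "\<bar>GoodSum d G (sf d) / exp (Phi d G (sf d)) - z\<bar> \<le> 3 * \<delta>"
        unfolding z_def using pt_eq[OF sd \<delta> _ _ _ _ hT] by simp
    qed
  qed
  have probs: "measure_pmf.prob (Qdp d p) {G. \<delta> < \<bar>QQ d G (sf d) - 1/2\<bar>} + measure_pmf.prob (Qdp d p) {G. \<delta> < CC d G (sf d)}
      + measure_pmf.prob (Qdp d p) {G. \<delta> < Bsum d G (sf d)} + measure_pmf.prob (Qdp d p) {G. MM d / 4 < Phi d G (sf d)}
      \<le> gg \<delta> d" if \<delta>: "0 < \<delta>" and d1: "1 \<le> d" for \<delta> d
    unfolding gg_def
  proof (intro add_mono)
    show "measure_pmf.prob (Qdp d p) {G. \<delta> < \<bar>QQ d G (sf d) - 1/2\<bar>} \<le> (1/2) * (3/4) ^ d / \<delta>^2"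
      using pQ[OF sd p0 p1 d1 \<delta>] unfolding sig2 c4 .
    show "measure_pmf.prob (Qdp d p) {G. \<delta> < CC d G (sf d)} \<le> (1/2) * (5/6) ^ d / \<delta>"
      using pC[OF sd p0 p1 d1 \<delta>] unfolding c3 .
    show "measure_pmf.prob (Qdp d p) {G. \<delta> < Bsum d G (sf d)} \<le> (real d)^2 / 2 * (8/9) ^ d / \<delta>"
      using pB[OF sd p0 p1 d1 \<delta>] unfolding rho .
    have "0 < MM d / 4" using d1 by (simp add: MM_def)
    then show "measure_pmf.prob (Qdp d p) {G. MM d / 4 < Phi d G (sf d)} \<le> mu_p p d / (MM d / 4)"
      by (rule pPhi[OF sd p0 p1 d1])
  qed
  show "\<forall>\<epsilon>>0. (\<lambda>d. measure_pmf.prob (Qdp d p)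
         {G. \<epsilon> < \<bar>GoodSum d G (sf d) / (zeta_p p * exp (Phi d G (sf d))) - 1\<bar>}) \<longlonglongrightarrow> 0"
  proof (intro allI impI)
    fix \<epsilon> :: real assume \<epsilon>: "0 < \<epsilon>"
    define \<delta> where "\<delta> = min (1/2) (\<epsilon> / 10)"
    have \<delta>: "0 < \<delta>" "\<delta> \<le> 1/2" "\<delta> \<le> \<epsilon> / 10" using \<epsilon> by (auto simp: \<delta>_def)
    have ez: "1 / z \<le> 3"
    proof -
      have "z * exp (1/4) = 1" unfolding z_def by (simp add: exp_add[symmetric])
      then have "1 / z = exp (1/4)" using z by (simp add: field_simps)
      also have "\<dots> \<le> exp 1" by simp
      also have "\<dots> \<le> 3" by (rule exp_le)
      finally show ?thesis .
    qed
    show "(\<lambda>d. measure_pmf.prob (Qdp d p)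
         {G. \<epsilon> < \<bar>GoodSum d G (sf d) / (zeta_p p * exp (Phi d G (sf d))) - 1\<bar>}) \<longlonglongrightarrow> 0"
    proof (rule tendsto_le_zero[where g = "gg \<delta>"])
      show "gg \<delta> \<longlonglongrightarrow> 0" by (rule gg0[OF \<delta>(1)])
      show "\<forall>\<^sub>F d in sequentially. measure_pmf.prob (Qdp d p)
         {G. \<epsilon> < \<bar>GoodSum d G (sf d) / (zeta_p p * exp (Phi d G (sf d))) - 1\<bar>} \<le> gg \<delta> d"
        using eventually_ge_at_top[of 1] cover[OF \<delta>(1,2)]
      proof eventually_elim
        case (elim d)
        have sub: "{G. \<epsilon> < \<bar>GoodSum d G (sf d) / (zeta_p p * exp (Phi d G (sf d))) - 1\<bar>}
          \<subseteq> {G. \<delta> < \<bar>QQ d G (sf d) - 1/2\<bar>} \<union> {G. \<delta> < CC d G (sf d)} \<union> {G. \<delta> < Bsum d G (sf d)} \<union> {G. MM d / 4 < Phi d G (sf d)}"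
        proof (rule subsetI, rule ccontr)
          fix G assume G: "G \<in> {G. \<epsilon> < \<bar>GoodSum d G (sf d) / (zeta_p p * exp (Phi d G (sf d))) - 1\<bar>}"
            and nG: "G \<notin> {G. \<delta> < \<bar>QQ d G (sf d) - 1/2\<bar>} \<union> {G. \<delta> < CC d G (sf d)} \<union> {G. \<delta> < Bsum d G (sf d)} \<union> {G. MM d / 4 < Phi d G (sf d)}"
          have b: "\<bar>GoodSum d G (sf d) / exp (Phi d G (sf d)) - z\<bar> \<le> 3 * \<delta>" using elim(2) nG by auto
          have "\<bar>GoodSum d G (sf d) / (z * exp (Phi d G (sf d))) - 1\<bar> = \<bar>GoodSum d G (sf d) / exp (Phi d G (sf d)) - z\<bar> * (1 / z)"
            using z by (simp add: field_simps abs_divide)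
          also have "\<dots> \<le> 3 * \<delta> * 3" using b ez z by (intro mult_mono) auto
          also have "\<dots> < \<epsilon>" using \<delta> \<epsilon> by simp
          finally show False using G zp by simp
        qed
        have "measure_pmf.prob (Qdp d p) {G. \<epsilon> < \<bar>GoodSum d G (sf d) / (zeta_p p * exp (Phi d G (sf d))) - 1\<bar>}
          \<le> measure_pmf.prob (Qdp d p) {G. \<delta> < \<bar>QQ d G (sf d) - 1/2\<bar>} + measure_pmf.prob (Qdp d p) {G. \<delta> < CC d G (sf d)}
           + measure_pmf.prob (Qdp d p) {G. \<delta> < Bsum d G (sf d)} + measure_pmf.prob (Qdp d p) {G. MM d / 4 < Phi d G (sf d)}"
          by (rule prob_cover4[OF sub])
        also have "\<dots> \<le> gg \<delta> d" by (rule probs[OF \<delta>(1) elim(1)])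
        finally show ?case .
      qed
    qed simp
  qed
  show "\<forall>\<epsilon>>0. (\<lambda>d. measure_pmf.prob (Qdp d p)
         {G. \<epsilon> < \<bar>(GoodSum d G (sf d) - zeta_p p * exp (Phi d G (sf d)))
                    / (sigma_p p d * exp (mu_p p d))\<bar>}) \<longlonglongrightarrow> 0"
  proof (intro allI impI)
    fix \<epsilon> :: real assume \<epsilon>: "0 < \<epsilon>"
    show "(\<lambda>d. measure_pmf.prob (Qdp d p)
         {G. \<epsilon> < \<bar>(GoodSum d G (sf d) - zeta_p p * exp (Phi d G (sf d)))
                    / (sigma_p p d * exp (mu_p p d))\<bar>}) \<longlonglongrightarrow> 0"
    proof (rule tendsto_zero_eta)
      fix \<eta> :: real assume \<eta>: "0 < \<eta>"
      define K where "K = 1 / \<eta> + 1"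
      have K: "1 \<le> K" "1 / \<eta> < K" using \<eta> by (auto simp: K_def)
      have K0: "0 < K" using K by simp
      have Keta: "(1/2) / K^2 \<le> \<eta>"
      proof -
        have "1 / K < \<eta>" using K \<eta> by (simp add: divide_less_eq field_simps)
        moreover have "(1/2) / K^2 \<le> 1 / K" using K by (simp add: power2_eq_square divide_simps)
        ultimately show ?thesis by linarith
      qed
      define \<delta> where "\<delta> = min (1/2) (\<epsilon> / (7 * exp K))"
      have \<delta>: "0 < \<delta>" "\<delta> \<le> 1/2" "\<delta> \<le> \<epsilon> / (7 * exp K)" using \<epsilon> by (auto simp: \<delta>_def)
      show "\<exists>g. g \<longlonglongrightarrow> 0 \<and> (\<forall>\<^sub>F d in sequentially. measure_pmf.prob (Qdp d p)
         {G. \<epsilon> < \<bar>(GoodSum d G (sf d) - zeta_p p * exp (Phi d G (sf d)))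
                    / (sigma_p p d * exp (mu_p p d))\<bar>} \<le> \<eta> + g d)"
      proof (intro exI conjI)
        show "gg \<delta> \<longlonglongrightarrow> 0" by (rule gg0[OF \<delta>(1)])
        show "\<forall>\<^sub>F d in sequentially. measure_pmf.prob (Qdp d p)
         {G. \<epsilon> < \<bar>(GoodSum d G (sf d) - zeta_p p * exp (Phi d G (sf d)))
                    / (sigma_p p d * exp (mu_p p d))\<bar>} \<le> \<eta> + gg \<delta> d"
          using eventually_ge_at_top[of 1] cover[OF \<delta>(1,2)]
        proof eventually_elim
          case (elim d)
          define A0 where "A0 = {G. K < Phi d G (sf d) - mu_p p d}"
          have sub: "{G. \<epsilon> < \<bar>(GoodSum d G (sf d) - zeta_p p * exp (Phi d G (sf d)))
                    / (sigma_p p d * exp (mu_p p d))\<bar>}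
            \<subseteq> A0 \<union> {G. \<delta> < \<bar>QQ d G (sf d) - 1/2\<bar>} \<union> {G. \<delta> < CC d G (sf d)} \<union> {G. \<delta> < Bsum d G (sf d)} \<union> {G. MM d / 4 < Phi d G (sf d)}"
          proof (rule subsetI, rule ccontr)
            fix G assume G: "G \<in> {G. \<epsilon> < \<bar>(GoodSum d G (sf d) - zeta_p p * exp (Phi d G (sf d)))
                    / (sigma_p p d * exp (mu_p p d))\<bar>}"
              and nG: "G \<notin> A0 \<union> {G. \<delta> < \<bar>QQ d G (sf d) - 1/2\<bar>} \<union> {G. \<delta> < CC d G (sf d)} \<union> {G. \<delta> < Bsum d G (sf d)} \<union> {G. MM d / 4 < Phi d G (sf d)}"
            have b: "\<bar>GoodSum d G (sf d) / exp (Phi d G (sf d)) - z\<bar> \<le> 3 * \<delta>" using elim(2) nG by auto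
            have h0: "Phi d G (sf d) - mu_p p d \<le> K" using nG by (auto simp: A0_def)
            have ee: "exp (Phi d G (sf d) - mu_p p d) \<le> exp K" using h0 by simp
            have "\<bar>(GoodSum d G (sf d) - zeta_p p * exp (Phi d G (sf d))) / (sigma_p p d * exp (mu_p p d))\<bar>
                = \<bar>GoodSum d G (sf d) / exp (Phi d G (sf d)) - z\<bar> * exp (Phi d G (sf d) - mu_p p d) / sigma_p p d"
              unfolding zp by (rule R_eq_gen[OF spos])
            also have "\<dots> \<le> \<bar>GoodSum d G (sf d) / exp (Phi d G (sf d)) - z\<bar> * exp (Phi d G (sf d) - mu_p p d) / (1/2)"
              using sge[of d] by (intro divide_left_mono) auto
            also have "\<dots> \<le> (3 * \<delta>) * exp K / (1/2)"
              using b ee by (intro divide_right_mono mult_mono) auto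
            also have "\<dots> = 6 * \<delta> * exp K" by simp
            also have "\<dots> < \<epsilon>"
            proof -
              have "6 * \<delta> * exp K \<le> 6 * (\<epsilon> / (7 * exp K)) * exp K" using \<delta> by (intro mult_right_mono) auto
              also have "\<dots> = 6/7 * \<epsilon>" by simp
              finally show ?thesis using \<epsilon> by linarith
            qed
            finally show False using G by simp
          qed
          have "measure_pmf.prob (Qdp d p) {G. \<epsilon> < \<bar>(GoodSum d G (sf d) - zeta_p p * exp (Phi d G (sf d)))
                    / (sigma_p p d * exp (mu_p p d))\<bar>}
            \<le> measure_pmf.prob (Qdp d p) A0 + measure_pmf.prob (Qdp d p) {G. \<delta> < \<bar>QQ d G (sf d) - 1/2\<bar>} + measure_pmf.prob (Qdp d p) {G. \<delta> < CC d G (sf d)}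
             + measure_pmf.prob (Qdp d p) {G. \<delta> < Bsum d G (sf d)} + measure_pmf.prob (Qdp d p) {G. MM d / 4 < Phi d G (sf d)}"
            by (rule prob_cover5[OF sub])
          also have "\<dots> \<le> \<eta> + gg \<delta> d"
          proof -
            have "measure_pmf.prob (Qdp d p) A0 \<le> (sigma_p p d)^2 / K^2"
              unfolding A0_def by (rule pA1[OF sd p0 p1 elim(1) K0])
            also have "\<dots> \<le> \<eta>" using Keta unfolding sig2 .
            finally show ?thesis using probs[OF \<delta>(1) elim(1)] by linarith
          qed
          finally show ?case .
        qed
      qed
    qed simp
  qed
qed

theorem lemma2p3:
  fixes p :: real
  assumes "2/3 \<le> p" and "p < 1"
  shows "\<forall>side \<in> {evens, odds}.
     (\<forall>\<epsilon>>0. (\<lambda>d. measure_pmf.prob (Qdp d p)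
         {G. \<epsilon> < \<bar>(GoodSum d G (side d) - zeta_p p * exp (Phi d G (side d)))
                    / (sigma_p p d * exp (mu_p p d))\<bar>}) \<longlonglongrightarrow> 0)
   \<and> (\<forall>\<epsilon>>0. (\<lambda>d. measure_pmf.prob (Qdp d p)
         {G. \<epsilon> < \<bar>GoodSum d G (side d) / (zeta_p p * exp (Phi d G (side d))) - 1\<bar>}) \<longlonglongrightarrow> 0)"
proof -
  have s1: "\<And>d. is_side d (evens d)" and s2: "\<And>d. is_side d (odds d)" by (simp_all add: is_side_def)
  show ?thesis
  proof (cases "p = 2/3")
    case True
    show ?thesis unfolding True using case_eq[OF s1] case_eq[OF s2] by auto
  next
    case False
    then have pg: "2/3 < p" using assms(1) by simp
    show ?thesis using case_gt[OF pg assms(2) s1] case_gt[OF pg assms(2) s2] by auto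
  qed
qed

end
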